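(* Let $\pi:\mathcal{A}(\mathbb{C}P^2_q)\to\mathcal{B}(\mathcal{H})$ be a $*$-representation by bounded operators on a Hilbert space with $\ker\pi(p_{11})=\{0\}$. Then there exist bounded operators $Z_1,Z_2,Z_3$ on $\mathcal{H}$ with $Z_1$ positive and $\ker Z_1=\{0\}$ such that $$\big(\pi(p_{ij})\big)_{i,j}=\begin{pmatrix}Z_1^2&qZ_2Z_1&qZ_3Z_1\\ qZ_1Z_2^*&Z_2^*Z_2&Z_2^*Z_3\\ qZ_1Z_3^*&Z_3^*Z_2&Z_3^*Z_3\end{pmatrix},$$ the assignment $\tilde\pi(z_i):=Z_i$ extends to a $*$-representation $\tilde\pi:\mathcal{A}(S^5_q)\to\mathcal{B}(\mathcal{H})$, $\tilde\pi(z_i^*z_j)=\pi(p_{ij})$ for all $i,j$ (so $\tilde\pi$ restricts to $\pi$ on $\mathcal{A}(\mathbb{C}P^2_q)$), and $\tilde\pi$ is irreducible whenever $\pi$ is irreducible.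
   Context: Fix $0<q<1$. $\mathcal{A}(S^5_q)$ is the unital $*$-algebra generated by $z_1,z_2,z_3$ and adjoints with relations $z_iz_j=qz_jz_i$ ($i<j$), $z_i^*z_j=qz_jz_i^*$ ($i\ne j$), $[z_1^*,z_1]=0$, $[z_2^*,z_2]=(1-q^2)z_1z_1^*$, $[z_3^*,z_3]=(1-q^2)(z_1z_1^*+z_2z_2^* )$, $z_1z_1^*+z_2z_2^*+z_3z_3^*=1$. $\mathcal{A}(\mathbb{C}P^2_q)$ is the unital $*$-subalgebra generated by $p_{ij}:=z_i^*z_j$, $i,j=1,2,3$. Representations are unital $*$-representations. *)

theory Defs
  imports "HOL-Analysis.Analysis"
begin

text \<open>A complex Hilbert space is modelled as a real Hilbert space (type class
  real_inner + complete_space) together with an orthogonal complex structure J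
  (multiplication by the imaginary unit).\<close>

definition cstruct :: "('h::real_inner \<Rightarrow> 'h) \<Rightarrow> bool" where
  "cstruct J \<longleftrightarrow> linear J \<and> (\<forall>x. J (J x) = - x) \<and> (\<forall>x y. inner (J x) (J y) = inner x y)"

text \<open>Complex inner product, conjugate-linear in the first, linear in the second argument.\<close>
definition cinner :: "('h::real_inner \<Rightarrow> 'h) \<Rightarrow> 'h \<Rightarrow> 'h \<Rightarrow> complex" where
  "cinner J x y = Complex (inner x y) (- inner x (J y))"

definition cbounded :: "('h::real_normed_vector \<Rightarrow> 'h) \<Rightarrow> ('h \<Rightarrow> 'h) \<Rightarrow> bool" where
  "cbounded J T \<longleftrightarrow> bounded_linear T \<and> (\<forall>x. T (J x) = J (T x))"

definition cscale :: "('h::real_vector \<Rightarrow> 'h) \<Rightarrow> complex \<Rightarrow> ('h \<Rightarrow> 'h) \<Rightarrow> ('h \<Rightarrow> 'h)" where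
  "cscale J c T = (\<lambda>x. Re c *\<^sub>R T x + Im c *\<^sub>R J (T x))"

definition cadj :: "('h::real_inner \<Rightarrow> 'h) \<Rightarrow> ('h \<Rightarrow> 'h) \<Rightarrow> ('h \<Rightarrow> 'h)" where
  "cadj J T = (THE S. \<forall>x y. cinner J (S x) y = cinner J x (T y))"

definition cpositive :: "('h::real_inner \<Rightarrow> 'h) \<Rightarrow> ('h \<Rightarrow> 'h) \<Rightarrow> bool" where
  "cpositive J T \<longleftrightarrow> (\<forall>x. Im (cinner J x (T x)) = 0 \<and> Re (cinner J x (T x)) \<ge> 0)"

datatype gen = G1 | G2 | G3

fun gnum :: "gen \<Rightarrow> nat" where
  "gnum G1 = 1" | "gnum G2 = 2" | "gnum G3 = 3"

text \<open>A letter (i, False) stands for z_i, (i, True) for z_i^*.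
  A polynomial is a finitely supported function from words to complex coefficients.\<close>
type_synonym letter = "gen \<times> bool"
type_synonym poly = "letter list \<Rightarrow> complex"

definition fsupp :: "poly \<Rightarrow> bool" where
  "fsupp f \<longleftrightarrow> finite {w. f w \<noteq> 0}"

definition polys :: "poly set" where
  "polys = {f. fsupp f}"

definition mon :: "letter list \<Rightarrow> poly" where
  "mon w = (\<lambda>v. if v = w then 1 else 0)"

definition pone :: poly where "pone = mon []"

definition padd :: "poly \<Rightarrow> poly \<Rightarrow> poly" where
  "padd f g = (\<lambda>w. f w + g w)"

definition psc :: "complex \<Rightarrow> poly \<Rightarrow> poly" where
  "psc c f = (\<lambda>w. c * f w)"

definition pdiff :: "poly \<Rightarrow> poly \<Rightarrow> poly" where
  "pdiff f g = (\<lambda>w. f w - g w)"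

definition pmul :: "poly \<Rightarrow> poly \<Rightarrow> poly" where
  "pmul f g = (\<lambda>w. \<Sum>k\<le>length w. f (take k w) * g (drop k w))"

definition wstar :: "letter list \<Rightarrow> letter list" where
  "wstar w = rev (map (\<lambda>(i, b). (i, \<not> b)) w)"

definition pstar :: "poly \<Rightarrow> poly" where
  "pstar f = (\<lambda>w. cnj (f (wstar w)))"

definition z :: "gen \<Rightarrow> poly" where "z i = mon [(i, False)]"
definition zs :: "gen \<Rightarrow> poly" where "zs i = mon [(i, True)]"

text \<open>The generators p_ij = z_i^* z_j of A(CP^2_q), as elements of the free algebra.\<close>
definition p :: "gen \<Rightarrow> gen \<Rightarrow> poly" where "p i j = mon [(i, True), (j, False)]"

section \<open>Defining relations of A(S^5_q) (each relation r means r = 0)\<close>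

definition comm :: "poly \<Rightarrow> poly \<Rightarrow> poly" where
  "comm a b = pdiff (pmul a b) (pmul b a)"

definition S5_rels :: "real \<Rightarrow> poly set" where
  "S5_rels q =
     {pdiff (pmul (z i) (z j)) (psc (of_real q) (pmul (z j) (z i))) | i j. gnum i < gnum j}
   \<union> {pdiff (pmul (zs i) (z j)) (psc (of_real q) (pmul (z j) (zs i))) | i j. i \<noteq> j}
   \<union> {comm (zs G1) (z G1),
      pdiff (comm (zs G2) (z G2)) (psc (of_real (1 - q\<^sup>2)) (pmul (z G1) (zs G1))),
      pdiff (comm (zs G3) (z G3))
        (psc (of_real (1 - q\<^sup>2)) (padd (pmul (z G1) (zs G1)) (pmul (z G2) (zs G2)))),
      pdiff (padd (padd (pmul (z G1) (zs G1)) (pmul (z G2) (zs G2))) (pmul (z G3) (zs G3))) pone}"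

text \<open>The two-sided *-ideal of the free *-algebra generated by the relations.
  A(S^5_q) is the quotient polys / S5_ideal q.\<close>
inductive_set S5_ideal :: "real \<Rightarrow> poly set" for q :: real where
  rel: "r \<in> S5_rels q \<Longrightarrow> r \<in> S5_ideal q"
| add: "f \<in> S5_ideal q \<Longrightarrow> g \<in> S5_ideal q \<Longrightarrow> padd f g \<in> S5_ideal q"
| sc: "f \<in> S5_ideal q \<Longrightarrow> psc c f \<in> S5_ideal q"
| lmul: "f \<in> S5_ideal q \<Longrightarrow> fsupp g \<Longrightarrow> pmul g f \<in> S5_ideal q"
| rmul: "f \<in> S5_ideal q \<Longrightarrow> fsupp g \<Longrightarrow> pmul f g \<in> S5_ideal q"
| star: "f \<in> S5_ideal q \<Longrightarrow> pstar f \<in> S5_ideal q"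

text \<open>Representatives of A(CP^2_q): the unital *-subalgebra of the free algebra generated
  by the p_ij; its image in A(S^5_q) is A(CP^2_q).\<close>
inductive_set CP2_alg :: "poly set" where
  one: "pone \<in> CP2_alg"
| gen: "p i j \<in> CP2_alg"
| add: "f \<in> CP2_alg \<Longrightarrow> g \<in> CP2_alg \<Longrightarrow> padd f g \<in> CP2_alg"
| sc: "f \<in> CP2_alg \<Longrightarrow> psc c f \<in> CP2_alg"
| mul: "f \<in> CP2_alg \<Longrightarrow> g \<in> CP2_alg \<Longrightarrow> pmul f g \<in> CP2_alg"
| star: "f \<in> CP2_alg \<Longrightarrow> pstar f \<in> CP2_alg"

text \<open>A unital *-representation, by bounded operators on the Hilbert space, of the
  *-subalgebra of A(S^5_q) represented by the (representative) set D: it is a map on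
  representatives that is well defined modulo the ideal, linear, multiplicative,
  unital and *-preserving.\<close>
definition star_rep :: "('h::real_inner \<Rightarrow> 'h) \<Rightarrow> real \<Rightarrow> poly set \<Rightarrow> (poly \<Rightarrow> 'h \<Rightarrow> 'h) \<Rightarrow> bool" where
  "star_rep J q D \<pi> \<longleftrightarrow>
     (\<forall>f\<in>D. cbounded J (\<pi> f))
   \<and> (\<forall>f\<in>D. \<forall>g\<in>D. pdiff f g \<in> S5_ideal q \<longrightarrow> \<pi> f = \<pi> g)
   \<and> \<pi> pone = id
   \<and> (\<forall>f\<in>D. \<forall>g\<in>D. \<pi> (padd f g) = (\<lambda>x. \<pi> f x + \<pi> g x))
   \<and> (\<forall>f\<in>D. \<forall>c. \<pi> (psc c f) = cscale J c (\<pi> f))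
   \<and> (\<forall>f\<in>D. \<forall>g\<in>D. \<pi> (pmul f g) = \<pi> f \<circ> \<pi> g)
   \<and> (\<forall>f\<in>D. \<pi> (pstar f) = cadj J (\<pi> f))"

definition irreducible_rep :: "('h::real_inner \<Rightarrow> 'h) \<Rightarrow> poly set \<Rightarrow> (poly \<Rightarrow> 'h \<Rightarrow> 'h) \<Rightarrow> bool" where
  "irreducible_rep J D \<pi> \<longleftrightarrow>
     (\<forall>V. closed V \<and> subspace V \<and> J ` V \<subseteq> V \<and> (\<forall>f\<in>D. \<pi> f ` V \<subseteq> V)
          \<longrightarrow> V = {0} \<or> V = UNIV)"

end

theory Submission
  imports Defs "HOL-Computational_Algebra.Formal_Power_Series"
begin


lemma cs_linear: "cstruct J \<Longrightarrow> linear J" by (simp add: cstruct_def)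
lemma cs_JJ[simp]: "cstruct J \<Longrightarrow> J (J x) = - x" by (simp add: cstruct_def)
lemma cs_inner: "cstruct J \<Longrightarrow> inner (J x) (J y) = inner x y" by (simp add: cstruct_def)
lemma cs_skew: "cstruct J \<Longrightarrow> inner (J x) y = - inner x (J y)"
proof -
  assume c: "cstruct J"
  have "inner (J x) y = inner (J (J x)) (J y)" using cs_inner[OF c] by simp
  also have "\<dots> = - inner x (J y)" using c by simp
  finally show ?thesis .
qed
lemma cs_norm: "cstruct J \<Longrightarrow> norm (J x) = norm x"
  by (simp add: norm_eq_sqrt_inner cs_inner)
lemma cs_bl: "cstruct J \<Longrightarrow> bounded_linear J"
  apply (rule bounded_linear_intro[where K=1])
  using cs_linear[of J] by (auto simp: linear_add linear_scale cs_norm)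
lemma cs_inner_xJx: "cstruct J \<Longrightarrow> inner x (J x) = 0"
  using cs_skew[of J x x] by (simp add: inner_commute)

section \<open>Projection theorem\<close>

lemma parallelogram_inner:
  fixes a b :: "'a::real_inner"
  shows "norm (a - b)^2 + norm (a + b)^2 = 2 * norm a ^2 + 2 * norm b ^2"
  by (simp add: power2_norm_eq_inner inner_add inner_diff inner_commute algebra_simps)

lemma quad_zero:
  fixes a b :: real
  assumes "b \<ge> 0" "\<And>t. 0 \<le> - 2 * t * a + t^2 * b"
  shows "a = 0"
proof -
  have e: "- 2 * (a/(b+1)) * a + (a/(b+1))^2 * b = - (a^2 * (b + 2)) / (b+1)^2"
  proof -
    have b1: "b + 1 \<noteq> 0" using assms(1) by simp
    show ?thesis using b1 by (simp add: divide_simps power2_eq_square) (simp add: algebra_simps)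
  qed
  have "0 \<le> - (a^2 * (b + 2)) / (b+1)^2" using assms(2)[of "a/(b+1)"] e by simp
  hence "a^2 * (b + 2) \<le> 0" using assms(1) by (simp add: divide_le_0_iff)
  hence "a^2 \<le> 0" using assms(1)
    by (metis add_nonneg_pos mult_le_0_iff not_le zero_le_power2 zero_less_numeral)
  thus ?thesis by simp
qed

lemma projection_exists:
  fixes M :: "'h::{real_inner,complete_space} set"
  assumes cl: "closed M" and sub: "subspace M"
  shows "\<exists>p\<in>M. \<forall>m\<in>M. inner (y - p) m = 0"
proof -
  define D where "D = (\<lambda>m. norm (y - m)^2) ` M"
  define d where "d = Inf D"
  have M0: "0 \<in> M" using sub by (simp add: subspace_0)
  have bdd: "bdd_below D" unfolding D_def by (rule bdd_belowI[where m=0]) auto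
  have Dne: "D \<noteq> {}" using M0 unfolding D_def by auto
  have dle: "d \<le> norm (y - m)^2" if "m \<in> M" for m
    unfolding d_def D_def using that bdd D_def by (auto intro!: cInf_lower)
  have ex: "\<exists>m\<in>M. norm (y - m)^2 < d + e" if "e > 0" for e
  proof -
    have "Inf D < d + e" using that d_def by simp
    then obtain x where "x \<in> D" "x < d + e" using cInf_lessD[OF Dne] by blast
    thus ?thesis unfolding D_def by auto
  qed
  have "\<forall>n. \<exists>m\<in>M. norm (y - m)^2 < d + 1/(Suc n)" using ex by simp
  then obtain ms where ms: "\<And>n. ms n \<in> M" "\<And>n. norm (y - ms n)^2 < d + 1/(Suc n)"
    by metis
  have key: "norm (ms k - ms l)^2 \<le> 2/(Suc k) + 2/(Suc l)" for k l
  proof -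
    have h: "(ms k + ms l) /\<^sub>R 2 \<in> M" using ms sub
      by (simp add: subspace_add subspace_scale)
    have "norm ((y - ms k) + (y - ms l))^2 = 4 * norm (y - (ms k + ms l) /\<^sub>R 2)^2"
    proof -
      have "(y - ms k) + (y - ms l) = 2 *\<^sub>R (y - (ms k + ms l) /\<^sub>R 2)"
        by (simp add: algebra_simps scaleR_2)
      thus ?thesis by (simp add: power2_eq_square)
    qed
    also have "\<dots> \<ge> 4 * d" using dle[OF h] by simp
    finally have a: "norm ((y - ms k) + (y - ms l))^2 \<ge> 4 * d" .
    have p: "norm ((y - ms k) - (y - ms l))^2 + norm ((y - ms k) + (y - ms l))^2
       = 2 * norm (y - ms k)^2 + 2 * norm (y - ms l)^2" by (rule parallelogram_inner)
    have "(y - ms k) - (y - ms l) = ms l - ms k" by simp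
    hence "norm (ms k - ms l)^2 = norm ((y - ms k) - (y - ms l))^2" by (simp add: norm_minus_commute)
    thus ?thesis using p a ms(2)[of k] ms(2)[of l] by linarith
  qed
  have "Cauchy ms"
  proof (rule CauchyI)
    fix e :: real assume e: "e > 0"
    obtain N :: nat where N: "4 / e^2 < N" using reals_Archimedean2 by blast
    show "\<exists>M. \<forall>m\<ge>M. \<forall>n\<ge>M. norm (ms m - ms n) < e"
    proof (intro exI allI impI)
      fix m n assume mn: "N \<le> m" "N \<le> n"
      have "4/e^2 < Suc m" "4/e^2 < Suc n" using N mn by linarith+
      hence "2 / Suc m < e^2/2" "2 / Suc n < e^2/2" using e
        by (auto simp: field_simps)
      hence "norm (ms m - ms n)^2 < e^2" using key[of m n] by linarith
      thus "norm (ms m - ms n) < e" using e by (meson abs_le_square_iff abs_norm_cancel less_le_not_le not_le power_less_imp_less_base) 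
    qed
  qed
  then obtain p where lim: "ms \<longlonglongrightarrow> p" using Cauchy_convergent_iff convergent_def by blast
  have pM: "p \<in> M" using cl ms(1) lim closed_sequentially by blast
  have "(\<lambda>n. norm (y - ms n)^2) \<longlonglongrightarrow> norm (y - p)^2"
    by (intro tendsto_intros lim)
  moreover have "(\<lambda>n. d + 1 / real (Suc n)) \<longlonglongrightarrow> d + 0"
    by (intro tendsto_intros LIMSEQ_inverse_real_of_nat[unfolded inverse_eq_divide])
  ultimately have "norm (y - p)^2 \<le> d"
    using ms(2) by (intro LIMSEQ_le[of "\<lambda>n. norm (y - ms n)^2" _ "\<lambda>n. d + 1/(Suc n)"]) (auto intro: less_imp_le)
  hence dp: "norm (y - p)^2 = d" using dle[OF pM] by simp
  show ?thesis
  proof (intro bexI[OF _ pM] ballI)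
    fix m assume m: "m \<in> M"
    show "inner (y - p) m = 0"
    proof (rule quad_zero[where b = "inner m m"])
      show "0 \<le> inner m m" by simp
      fix t
      have "p + t *\<^sub>R m \<in> M" using pM m sub by (simp add: subspace_add subspace_scale)
      hence "d \<le> norm (y - (p + t *\<^sub>R m))^2" by (rule dle)
      also have "norm (y - (p + t *\<^sub>R m))^2 = norm (y - p)^2 - 2 * t * inner (y - p) m + t^2 * inner m m"
        by (simp only: power2_norm_eq_inner) (simp add: inner_diff inner_add inner_commute algebra_simps power2_eq_square)
      finally show "0 \<le> - 2 * t * inner (y - p) m + t^2 * inner m m" using dp by simp
    qed
  qed
qed

section \<open>Riesz representation\<close>

lemma riesz:
  fixes f :: "'h::{real_inner,complete_space} \<Rightarrow> real"
  assumes bl: "bounded_linear f"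
  shows "\<exists>v. \<forall>x. f x = inner v x"
proof (cases "\<forall>x. f x = 0")
  case True thus ?thesis by (intro exI[of _ 0]) simp
next
  case False
  then obtain u where u: "f u \<noteq> 0" by blast
  define K where "K = {x. f x = 0}"
  have clK: "closed K" unfolding K_def
    using bl by (intro closed_Collect_eq) (auto intro: linear_continuous_on continuous_intros)
  have subK: "subspace K" unfolding K_def subspace_def
    using bl by (simp add: bounded_linear.linear linear_add linear_scale linear_0)
  obtain p where pK: "p \<in> K" and orth: "\<forall>m\<in>K. inner (u - p) m = 0"
    using projection_exists[OF clK subK] by blast
  define w where "w = u - p"
  have fw: "f w = f u" using pK bl unfolding w_def K_def by (simp add: linear_diff bounded_linear.linear)
  hence w0: "w \<noteq> 0" using u bl by (auto simp: linear_0 bounded_linear.linear)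
  have ww: "inner w w \<noteq> 0" using w0 by simp
  show ?thesis
  proof (intro exI allI)
    fix x
    have "x - (f x / f w) *\<^sub>R w \<in> K" unfolding K_def
      using bl fw u by (simp add: linear_diff linear_scale bounded_linear.linear)
    hence "inner w (x - (f x / f w) *\<^sub>R w) = 0" using orth w_def by simp
    hence "inner w x = f x / f w * inner w w" by (simp add: inner_diff_right)
    thus "f x = inner ((f w / inner w w) *\<^sub>R w) x" using ww fw u by (simp add: field_simps)
  qed
qed

definition isadj :: "('h::real_inner \<Rightarrow> 'h) \<Rightarrow> ('h \<Rightarrow> 'h) \<Rightarrow> bool" where
  "isadj S T \<longleftrightarrow> (\<forall>x y. inner (S x) y = inner x (T y))"

lemma isadj_unique: "isadj S T \<Longrightarrow> isadj S' T \<Longrightarrow> S = S'"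
proof (rule ext)
  fix x assume a: "isadj S T" "isadj S' T"
  have "inner (S x - S' x) (S x - S' x) = 0" using a unfolding isadj_def
    by (simp add: inner_diff_left)
  thus "S x = S' x" by simp
qed

lemma isadj_bl:
  fixes T :: "'h::{real_inner,complete_space} \<Rightarrow> 'h"
  assumes "isadj S T" "bounded_linear T" shows "bounded_linear S"
proof -
  have l: "S (a + b) = S a + S b" "S (r *\<^sub>R a) = r *\<^sub>R S a" for a b r
  proof -
    have "inner (S (a + b) - (S a + S b)) y = 0" for y
      using assms(1) unfolding isadj_def by (simp add: inner_diff_left inner_add_left inner_add_right)
    from this[of "S (a + b) - (S a + S b)"] show "S (a + b) = S a + S b" by simp
    have "inner (S (r *\<^sub>R a) - r *\<^sub>R S a) y = 0" for y
      using assms(1) unfolding isadj_def by (simp add: inner_diff_left)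
    from this[of "S (r *\<^sub>R a) - r *\<^sub>R S a"] show "S (r *\<^sub>R a) = r *\<^sub>R S a" by simp
  qed
  obtain K where K: "\<And>x. norm (T x) \<le> norm x * K" "K > 0"
    using bounded_linear.pos_bounded[OF assms(2)] by blast
  have "norm (S x) \<le> norm x * K" for x
  proof -
    have "norm (S x)^2 = inner x (T (S x))" using assms(1) unfolding isadj_def
      by (simp add: power2_norm_eq_inner)
    also have "\<dots> \<le> norm x * norm (T (S x))" using norm_cauchy_schwarz by blast
    also have "\<dots> \<le> norm x * (norm (S x) * K)" using K(1) by (simp add: mult_left_mono)
    finally have "norm (S x) * norm (S x) \<le> norm (S x) * (norm x * K)" by (simp add: power2_eq_square algebra_simps)
    thus ?thesis using K(2) by (cases "S x = 0") auto
  qed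
  thus ?thesis using l by (intro bounded_linear_intro) auto
qed

lemma adj_exists:
  fixes T :: "'h::{real_inner,complete_space} \<Rightarrow> 'h"
  assumes "bounded_linear T" shows "\<exists>S. isadj S T"
proof -
  have "\<exists>v. \<forall>y. inner x (T y) = inner v y" for x
    by (rule riesz) (intro bounded_linear_compose[OF bounded_linear_inner_right assms])
  then obtain S where "\<And>x y. inner x (T y) = inner (S x) y" by metis
  thus ?thesis unfolding isadj_def by metis
qed

lemma isadj_sym: "isadj S T \<Longrightarrow> isadj T S"
  unfolding isadj_def by (metis inner_commute)



section \<open>Coefficients of sqrt(1-x)\<close>

definition sqc :: "nat \<Rightarrow> real" where "sqc n = ((1/2::real) gchoose n) * (-1)^n"

lemma sqc_0[simp]: "sqc 0 = 1" by (simp add: sqc_def)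

lemma sqc_rec: "real (Suc n) * sqc (Suc n) = (real n - 1/2) * sqc n"
proof -
  have a: "of_nat (Suc n) * ((1/2::real) gchoose Suc n) = (1/2) * ((1/2 - 1) gchoose n)"
    by (rule gbinomial_absorption)
  have b: "((1/2::real) - of_nat n) * ((1/2) gchoose n) = (1/2) * ((1/2 - 1) gchoose n)"
    by (rule gbinomial_absorb_comp)
  have "real (Suc n) * ((1/2::real) gchoose Suc n) = ((1/2::real) - real n) * ((1/2) gchoose n)"
    using a b by simp
  hence "real (Suc n) * (((1/2::real) gchoose Suc n) * (-1)^Suc n) = ((1/2::real) - real n) * ((1/2) gchoose n) * (-1)^Suc n"
    by simp
  thus ?thesis unfolding sqc_def by (simp add: algebra_simps)
qed

lemma sqc_1: "sqc 1 = -1/2" by (simp add: sqc_def)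
lemma sqc_Suc0: "sqc (Suc 0) = -1/2" by (simp add: sqc_def)

lemma sqc_nonpos: "n \<ge> 1 \<Longrightarrow> sqc n \<le> 0"
proof (induction n)
  case 0 thus ?case by simp
next
  case (Suc n)
  show ?case
  proof (cases "n = 0")
    case True thus ?thesis by (simp add: sqc_Suc0)
  next
    case False
    hence "sqc n \<le> 0" using Suc by simp
    moreover have "real n - 1/2 > 0" using False by simp
    ultimately have "real (Suc n) * sqc (Suc n) \<le> 0" using sqc_rec[of n] by (simp add: mult_nonneg_nonpos)
    thus ?thesis by (simp add: mult_le_0_iff)
  qed
qed

lemma sqc_partial: "(\<Sum>n\<in>{1..N}. sqc n) = -1 - 2 * real (Suc N) * sqc (Suc N)"
proof (induction N)
  case 0
  have "real (Suc 0) * sqc (Suc 0) = (0 - 1/2) * sqc 0" using sqc_rec[of 0] by simp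
  thus ?case by (simp add: sqc_1)
next
  case (Suc N)
  have "(\<Sum>n\<in>{1..Suc N}. sqc n) = (\<Sum>n\<in>{1..N}. sqc n) + sqc (Suc N)" by simp
  also have "\<dots> = -1 - 2 * real (Suc N) * sqc (Suc N) + sqc (Suc N)" using Suc by simp
  also have "\<dots> = -1 - 2 * (real (Suc N) * sqc (Suc N)) + sqc (Suc N)" by simp
  also have "\<dots> = -1 - 2 * (real (Suc (Suc N)) * sqc (Suc (Suc N)))"
    using sqc_rec[of "Suc N"] by (simp add: algebra_simps)
  finally show ?case by simp
qed

lemma sqc_abs_partial: "(\<Sum>n\<in>{1..N}. \<bar>sqc n\<bar>) \<le> 1"
proof -
  have "(\<Sum>n\<in>{1..N}. \<bar>sqc n\<bar>) = - (\<Sum>n\<in>{1..N}. sqc n)"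
    unfolding sum_negf[symmetric] by (rule sum.cong) (auto simp: sqc_nonpos abs_of_nonpos)
  also have "\<dots> = 1 + 2 * real (Suc N) * sqc (Suc N)" by (subst sqc_partial) simp
  also have "\<dots> \<le> 1" using sqc_nonpos[of "Suc N"] by (simp add: mult_nonneg_nonpos)
  finally show ?thesis .
qed

lemma sqc_abs_shift_partial: "(\<Sum>n<N. \<bar>sqc (Suc n)\<bar>) \<le> 1"
proof -
  have "(\<Sum>n<N. \<bar>sqc (Suc n)\<bar>) = (\<Sum>n\<in>{1..N}. \<bar>sqc n\<bar>)"
    by (rule sum.reindex_bij_witness[where i="\<lambda>n. n - 1" and j=Suc]) auto
  thus ?thesis using sqc_abs_partial by simp
qed

lemma sqc_shift_summable: "summable (\<lambda>n. \<bar>sqc (Suc n)\<bar>)"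
  by (rule summableI_nonneg_bounded[where x=1]) (auto simp: sqc_abs_shift_partial)

lemma sqc_abs_summable: "summable (\<lambda>n. \<bar>sqc n\<bar>)"
  using sqc_shift_summable summable_Suc_iff by blast

lemma sqc_shift_sum_le: "(\<Sum>n. \<bar>sqc (Suc n)\<bar>) \<le> 1"
  by (rule suminf_le_const[OF sqc_shift_summable sqc_abs_shift_partial])

lemma sqc_conv: "(\<Sum>i\<le>k. sqc i * sqc (k - i)) = (if k = 0 then 1 else if k = 1 then -1 else 0)"
proof -
  have "(\<Sum>i\<le>k. sqc i * sqc (k - i)) = (\<Sum>i\<in>{0..k}. ((1/2::real) gchoose i) * ((1/2) gchoose (k - i))) * (-1)^k"
    unfolding sqc_def sum_distrib_right atLeast0AtMost
    by (rule sum.cong) (auto simp: power_add[symmetric])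
  also have "\<dots> = ((1/2 + 1/2::real) gchoose k) * (-1)^k" by (simp only: gbinomial_Vandermonde)
  also have "\<dots> = real (1 choose k) * (-1)^k" by (simp add: binomial_gbinomial)
  also have "\<dots> = (if k = 0 then 1 else if k = 1 then -1 else 0)"
    by (cases k) (auto simp: binomial_eq_0)
  finally show ?thesis .
qed

lemma summable_Cauchy_c: "summable f \<longleftrightarrow> (\<forall>e>0. \<exists>N. \<forall>m\<ge>N. \<forall>n. norm (sum f {m..<n}) < e)" (is "_ = ?rhs")
  for f :: "nat \<Rightarrow> 'a::{real_normed_vector,complete_space}"
proof
  assume f: "summable f"
  show ?rhs
  proof clarify
    fix e :: real
    assume "0 < e"
    then obtain M where M: "\<And>m n. \<lbrakk>m\<ge>M; n\<ge>M\<rbrakk> \<Longrightarrow> norm (sum f {..<m} - sum f {..<n}) < e"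
      using f by (force simp add: summable_iff_convergent Cauchy_convergent_iff [symmetric] Cauchy_iff)
    have "norm (sum f {m..<n}) < e" if "m \<ge> M" for m n
    proof (cases m n rule: linorder_class.le_cases)
      assume "m \<le> n"
      then show ?thesis
        by (metis (mono_tags, opaque_lifting) M atLeast0LessThan order_trans sum_diff_nat_ivl that zero_le)
    next
      assume "n \<le> m"
      then show ?thesis
        by (simp add: \<open>0 < e\<close>)
    qed
    then show "\<exists>N. \<forall>m\<ge>N. \<forall>n. norm (sum f {m..<n}) < e"
      by blast
  qed
next
  assume r: ?rhs
  then show "summable f"
    unfolding summable_iff_convergent Cauchy_convergent_iff [symmetric] Cauchy_iff
  proof clarify
    fix e :: real
    assume "0 < e"
    with r obtain N where N: "\<And>m n. m \<ge> N \<Longrightarrow> norm (sum f {m..<n}) < e"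
      by blast
    have "norm (sum f {..<m} - sum f {..<n}) < e" if "m\<ge>N" "n\<ge>N" for m n
    proof (cases m n rule: linorder_class.le_cases)
      assume "m \<le> n"
      then show ?thesis
        by (metis N finite_lessThan lessThan_minus_lessThan lessThan_subset_iff norm_minus_commute sum_diff \<open>m\<ge>N\<close>)
    next
      assume "n \<le> m"
      then show ?thesis
        by (metis N finite_lessThan lessThan_minus_lessThan lessThan_subset_iff sum_diff \<open>n\<ge>N\<close>)
    qed
    then show "\<exists>M. \<forall>m\<ge>M. \<forall>n\<ge>M. norm (sum f {..<m} - sum f {..<n}) < e"
      by blast
  qed
qed

lemma summable_comparison_c:
  fixes f :: "nat \<Rightarrow> 'a::{real_normed_vector,complete_space}"
  assumes N: "\<And>n. norm (f n) \<le> g n" and g: "summable g"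
  shows "summable f"
proof (clarsimp simp add: summable_Cauchy_c)
  fix e :: real
  assume "0 < e"
  then obtain Ng where Ng: "\<And>m n. m \<ge> Ng \<Longrightarrow> norm (sum g {m..<n}) < e"
    using g by (fastforce simp: summable_Cauchy)
  have "norm (sum f {m..<n}) < e" if "m\<ge>Ng" for m n
  proof -
    have "norm (sum f {m..<n}) \<le> sum g {m..<n}"
      using N that by (force intro: sum_norm_le)
    also have "... \<le> norm (sum g {m..<n})"
      by simp
    also have "... < e"
      using Ng that by auto
    finally show ?thesis .
  qed
  thus "\<exists>N. \<forall>m\<ge>N. \<forall>n. norm (sum f {m..<n}) < e" by blast
qed

section \<open>Operator square root, pointwise\<close>

definition Csq :: real where "Csq = (\<Sum>n. \<bar>sqc n\<bar>)"

definition nbop :: "('h::real_normed_vector \<Rightarrow> 'h) \<Rightarrow> bool" where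
  "nbop B \<longleftrightarrow> bounded_linear B \<and> (\<forall>x. norm (B x) \<le> norm x)"

definition PS :: "('h::real_normed_vector \<Rightarrow> 'h) \<Rightarrow> nat \<Rightarrow> 'h \<Rightarrow> 'h" where
  "PS B N x = (\<Sum>n<N. sqc n *\<^sub>R (B ^^ n) x)"

definition SQ :: "('h::real_normed_vector \<Rightarrow> 'h) \<Rightarrow> 'h \<Rightarrow> 'h" where
  "SQ B x = (\<Sum>n. sqc n *\<^sub>R (B ^^ n) x)"

lemma pow_bl: "bounded_linear (B :: 'a::real_normed_vector \<Rightarrow> 'a) \<Longrightarrow> bounded_linear (B ^^ n)"
proof (induction n)
  case 0
  show ?case by (simp add: id_def bounded_linear_ident)
next
  case (Suc n) thus ?case using bounded_linear_compose[OF Suc(2) Suc(1)] by (simp add: o_def)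
qed

lemma pow_norm: "nbop B \<Longrightarrow> norm ((B ^^ n) x) \<le> norm x"
  by (induction n) (auto simp: nbop_def intro: order_trans)

lemma sqc_abs_sum_le: "(\<Sum>n\<in>F. \<bar>sqc n\<bar>) \<le> Csq" if "finite F"
  unfolding Csq_def by (rule sum_le_suminf[OF sqc_abs_summable that]) auto

lemma Csq_nonneg: "Csq \<ge> 0" unfolding Csq_def by (rule suminf_nonneg[OF sqc_abs_summable]) simp

lemma SQ_summable:
  fixes B :: "'h::{real_normed_vector,complete_space} \<Rightarrow> 'h"
  assumes "nbop B" shows "summable (\<lambda>n. sqc n *\<^sub>R (B ^^ n) x)"
proof (rule summable_comparison_c)
  show "summable (\<lambda>n. \<bar>sqc n\<bar> * norm x)" by (intro summable_mult2 sqc_abs_summable)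
  fix n show "norm (sqc n *\<^sub>R (B ^^ n) x) \<le> \<bar>sqc n\<bar> * norm x"
    using pow_norm[OF assms, of n x] by (simp add: mult_left_mono)
qed

lemma PS_lim:
  fixes B :: "'h::{real_normed_vector,complete_space} \<Rightarrow> 'h"
  assumes "nbop B" shows "(\<lambda>N. PS B N x) \<longlonglongrightarrow> SQ B x"
  unfolding PS_def SQ_def by (rule summable_LIMSEQ[OF SQ_summable[OF assms]])

lemma PS_norm: assumes "nbop B" shows "norm (PS B N x) \<le> Csq * norm x"
proof -
  have "norm (PS B N x) \<le> (\<Sum>n<N. norm (sqc n *\<^sub>R (B ^^ n) x))" unfolding PS_def by (rule norm_sum)
  also have "\<dots> \<le> (\<Sum>n<N. \<bar>sqc n\<bar> * norm x)"
    by (intro sum_mono) (use pow_norm[OF assms] in \<open>simp add: mult_left_mono\<close>)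
  also have "\<dots> = (\<Sum>n<N. \<bar>sqc n\<bar>) * norm x" by (simp add: sum_distrib_right)
  also have "\<dots> \<le> Csq * norm x" by (intro mult_right_mono sqc_abs_sum_le) auto
  finally show ?thesis .
qed

lemma PS_diff: assumes "nbop B" shows "PS B N (a - b) = PS B N a - PS B N b"
proof -
  have "(B ^^ n) (a - b) = (B ^^ n) a - (B ^^ n) b" for n
    using pow_bl[of B n] assms unfolding nbop_def by (metis linear_diff bounded_linear.linear)
  thus ?thesis unfolding PS_def by (simp add: scaleR_diff_right sum_subtractf)
qed

lemma SQ_norm:
  fixes B :: "'h::{real_normed_vector,complete_space} \<Rightarrow> 'h"
  assumes "nbop B" shows "norm (SQ B x) \<le> Csq * norm x"
  by (rule LIMSEQ_le_const2[OF tendsto_norm[OF PS_lim[OF assms]]]) (use PS_norm[OF assms] in auto)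

lemma SQ_bl:
  fixes B :: "'h::{real_normed_vector,complete_space} \<Rightarrow> 'h"
  assumes "nbop B" shows "bounded_linear (SQ B)"
proof (rule bounded_linear_intro[where K=Csq])
  have bl: "bounded_linear (B ^^ n)" for n using pow_bl assms by (auto simp: nbop_def)
  fix x y :: 'h and r :: real
  show "SQ B (x + y) = SQ B x + SQ B y"
    unfolding SQ_def
    by (subst suminf_add[OF SQ_summable[OF assms] SQ_summable[OF assms]])
       (simp add: linear_add[OF bounded_linear.linear[OF bl]] scaleR_add_right)
  have "r *\<^sub>R SQ B x = (\<Sum>n. r *\<^sub>R (sqc n *\<^sub>R (B ^^ n) x))"
    unfolding SQ_def by (rule bounded_linear.suminf[OF bounded_linear_scaleR_right SQ_summable[OF assms]])
  thus "SQ B (r *\<^sub>R x) = r *\<^sub>R SQ B x"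
    unfolding SQ_def by (simp add: linear_scale[OF bounded_linear.linear[OF bl]] mult.commute)
  show "norm (SQ B x) \<le> norm x * Csq" using SQ_norm[OF assms] by (simp add: mult.commute)
qed

lemma SQ_functional:
  fixes B :: "'h::{real_normed_vector,complete_space} \<Rightarrow> 'h"
  assumes "nbop B" "bounded_linear L"
  shows "L (SQ B x) = (\<Sum>n. sqc n * L ((B ^^ n) x))" and "summable (\<lambda>n. sqc n * L ((B ^^ n) x))"
  unfolding SQ_def
  using bounded_linear.suminf[OF assms(2) SQ_summable[OF assms(1)]]
    bounded_linear.summable[OF assms(2) SQ_summable[OF assms(1)]]
  by (simp_all add: linear_scale[OF bounded_linear.linear[OF assms(2)]])

lemma SQ_intertw:
  fixes B :: "'h::{real_normed_vector,complete_space} \<Rightarrow> 'h" and B' :: "'g::{real_normed_vector,complete_space} \<Rightarrow> 'g"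
  assumes "nbop B" "nbop B'" "bounded_linear C" "\<And>y. B (C y) = C (B' y)"
  shows "SQ B (C x) = C (SQ B' x)"
proof -
  have p: "(B ^^ n) (C y) = C ((B' ^^ n) y)" for n y by (induction n) (auto simp: assms(4))
  have "C (SQ B' x) = (\<Sum>n. C (sqc n *\<^sub>R (B' ^^ n) x))"
    unfolding SQ_def by (rule bounded_linear.suminf[OF assms(3) SQ_summable[OF assms(2)]])
  also have "\<dots> = SQ B (C x)"
    unfolding SQ_def by (simp add: p linear_scale[OF bounded_linear.linear[OF assms(3)]])
  finally show ?thesis by simp
qed

lemma SQ_sq:
  fixes B :: "'h::{real_normed_vector,complete_space} \<Rightarrow> 'h"
  assumes nb: "nbop B" shows "SQ B (SQ B x) = x - B x"
proof -
  define y where "y = SQ B x"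
  have blB: "bounded_linear B" using nb by (simp add: nbop_def)
  have bl: "bounded_linear (B ^^ n)" for n by (rule pow_bl[OF blB])
  let ?S1 = "\<lambda>n::nat. {..<n} \<times> {..<n}"
  let ?S2 = "\<lambda>n::nat. {(i,j). i + j < n}"
  have S1_mono: "\<And>m n. m \<le> n \<Longrightarrow> ?S1 m \<subseteq> ?S1 n" by auto
  have S2_le_S1: "\<And>n. ?S2 n \<subseteq> ?S1 n" by auto
  have S1_le_S2: "\<And>n. ?S1 (n div 2) \<subseteq> ?S2 n" by auto
  have finite_S1: "\<And>n. finite (?S1 n)" by simp
  with S2_le_S1 have finite_S2: "\<And>n. finite (?S2 n)" by (rule finite_subset)
  let ?g = "\<lambda>(i,j). (sqc i * sqc j) *\<^sub>R (B ^^ (i + j)) x"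
  let ?f = "\<lambda>(i,j). \<bar>sqc i\<bar> * \<bar>sqc j\<bar> * norm x"
  have f_nonneg: "\<And>x. 0 \<le> ?f x" by auto
  then have norm_sum_f: "\<And>A. norm (sum ?f A) = sum ?f A"
    unfolding real_norm_def
    by (simp only: abs_of_nonneg sum_nonneg [rule_format])
  have "(\<lambda>N. PS B N (PS B N x - y)) \<longlonglongrightarrow> 0"
  proof (rule Lim_null_comparison)
    show "\<forall>\<^sub>F N in sequentially. norm (PS B N (PS B N x - y)) \<le> Csq * norm (PS B N x - y)"
      using PS_norm[OF nb] by simp
    have "(\<lambda>N. PS B N x - y) \<longlonglongrightarrow> 0" using PS_lim[OF nb, of x] unfolding y_def
      by (simp add: LIM_zero)
    thus "(\<lambda>N. Csq * norm (PS B N x - y)) \<longlonglongrightarrow> 0"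
      by (metis mult_zero_right tendsto_mult_left tendsto_norm_zero)
  qed
  hence "(\<lambda>N. PS B N (PS B N x - y) + PS B N y) \<longlonglongrightarrow> 0 + SQ B y"
    by (intro tendsto_add PS_lim[OF nb])
  hence "(\<lambda>N. PS B N (PS B N x)) \<longlonglongrightarrow> SQ B y" by (simp add: PS_diff[OF nb])
  moreover have "PS B N (PS B N x) = sum ?g (?S1 N)" for N
  proof -
    have "PS B N (PS B N x) = (\<Sum>i<N. sqc i *\<^sub>R (B ^^ i) (\<Sum>j<N. sqc j *\<^sub>R (B ^^ j) x))"
      unfolding PS_def ..
    also have "\<dots> = (\<Sum>i<N. \<Sum>j<N. (sqc i * sqc j) *\<^sub>R (B ^^ (i + j)) x)"
      by (simp add: linear_sum[OF bounded_linear.linear[OF bl]] linear_scale[OF bounded_linear.linear[OF bl]]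
          scaleR_sum_right funpow_add)
    also have "\<dots> = sum ?g (?S1 N)" by (simp add: sum.cartesian_product)
    finally show ?thesis .
  qed
  ultimately have 1: "(\<lambda>n. sum ?g (?S1 n)) \<longlonglongrightarrow> SQ B y" by simp
  have "(\<lambda>n. (\<Sum>k<n. \<bar>sqc k\<bar>) * (\<Sum>k<n. \<bar>sqc k\<bar>) * norm x) \<longlonglongrightarrow> Csq * Csq * norm x"
    unfolding Csq_def by (intro tendsto_mult summable_LIMSEQ sqc_abs_summable tendsto_const)
  moreover have "(\<Sum>k<n. \<bar>sqc k\<bar>) * (\<Sum>k<n. \<bar>sqc k\<bar>) * norm x = sum ?f (?S1 n)" for n
  proof -
    have "(\<Sum>k<n. \<bar>sqc k\<bar>) * (\<Sum>k<n. \<bar>sqc k\<bar>) * norm x = (\<Sum>i<n. \<bar>sqc i\<bar> * ((\<Sum>j<n. \<bar>sqc j\<bar>) * norm x))"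
      by (simp add: sum_distrib_right mult.assoc)
    also have "\<dots> = (\<Sum>i<n. \<Sum>j<n. \<bar>sqc i\<bar> * \<bar>sqc j\<bar> * norm x)"
      by (simp add: sum_distrib_left sum_distrib_right mult.assoc)
    also have "\<dots> = sum ?f (?S1 n)" by (rule sum.cartesian_product)
    finally show ?thesis .
  qed
  ultimately have "(\<lambda>n. sum ?f (?S1 n)) \<longlonglongrightarrow> Csq * Csq * norm x" by simp
  then have "convergent (\<lambda>n. sum ?f (?S1 n))"
    by (rule convergentI)
  then have Cauchy: "Cauchy (\<lambda>n. sum ?f (?S1 n))"
    by (rule convergent_Cauchy)
  have "Zfun (\<lambda>n. sum ?f (?S1 n - ?S2 n)) sequentially"
  proof (rule ZfunI, simp only: eventually_sequentially norm_sum_f)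
    fix r :: real
    assume r: "0 < r"
    from CauchyD [OF Cauchy r] obtain N
      where "\<forall>m\<ge>N. \<forall>n\<ge>N. norm (sum ?f (?S1 m) - sum ?f (?S1 n)) < r" ..
    then have "\<And>m n. N \<le> n \<Longrightarrow> n \<le> m \<Longrightarrow> norm (sum ?f (?S1 m - ?S1 n)) < r"
      by (simp only: sum_diff finite_S1 S1_mono)
    then have N: "\<And>m n. N \<le> n \<Longrightarrow> n \<le> m \<Longrightarrow> sum ?f (?S1 m - ?S1 n) < r"
      by (simp only: norm_sum_f)
    show "\<exists>N. \<forall>n\<ge>N. sum ?f (?S1 n - ?S2 n) < r"
    proof (intro exI allI impI)
      fix n
      assume "2 * N \<le> n"
      then have n: "N \<le> n div 2" by simp
      have "sum ?f (?S1 n - ?S2 n) \<le> sum ?f (?S1 n - ?S1 (n div 2))"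
        by (intro sum_mono2 finite_Diff finite_S1 f_nonneg Diff_mono subset_refl S1_le_S2)
      also have "\<dots> < r"
        using n div_le_dividend by (rule N)
      finally show "sum ?f (?S1 n - ?S2 n) < r" .
    qed
  qed
  then have "Zfun (\<lambda>n. sum ?g (?S1 n - ?S2 n)) sequentially"
    apply (rule Zfun_le [rule_format])
    apply (simp only: norm_sum_f)
    apply (rule order_trans [OF norm_sum sum_mono])
    using pow_norm[OF nb] by (auto simp add: abs_mult mult_left_mono)
  then have 2: "(\<lambda>n. sum ?g (?S1 n) - sum ?g (?S2 n)) \<longlonglongrightarrow> 0"
    unfolding tendsto_Zfun_iff diff_0_right
    by (simp only: sum_diff finite_S1 S2_le_S1)
  with 1 have "(\<lambda>n. sum ?g (?S2 n)) \<longlonglongrightarrow> SQ B y"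
    by (rule Lim_transform2)
  moreover have "sum ?g (?S2 n) = x - B x" if "n \<ge> 2" for n
  proof -
    have "sum ?g (?S2 n) = (\<Sum>k<n. \<Sum>i\<le>k. ?g (i, k - i))"
      using sum.triangle_reindex[of "\<lambda>i j. (sqc i * sqc j) *\<^sub>R (B ^^ (i + j)) x" n] by simp
    also have "\<dots> = (\<Sum>k<n. (if k = 0 then 1 else if k = 1 then -1 else 0) *\<^sub>R (B ^^ k) x)"
    proof (rule sum.cong[OF refl])
      fix k
      have "(\<Sum>i\<le>k. ?g (i, k - i)) = (\<Sum>i\<le>k. (sqc i * sqc (k - i)) *\<^sub>R (B ^^ k) x)"
        by (rule sum.cong) auto
      also have "\<dots> = (\<Sum>i\<le>k. sqc i * sqc (k - i)) *\<^sub>R (B ^^ k) x" by (simp add: scaleR_sum_left)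
      finally show "(\<Sum>i\<le>k. ?g (i, k - i)) = (if k = 0 then 1 else if k = 1 then -1 else 0) *\<^sub>R (B ^^ k) x"
        by (simp add: sqc_conv)
    qed
    also have "\<dots> = (\<Sum>k\<in>{0,1}. (if k = 0 then 1 else if k = 1 then -1 else 0) *\<^sub>R (B ^^ k) x)"
      by (rule sum.mono_neutral_right) (use that in auto)
    also have "\<dots> = x - B x" by simp
    finally show ?thesis .
  qed
  hence "(\<lambda>n. sum ?g (?S2 n)) \<longlonglongrightarrow> x - B x"
    by (intro tendsto_eventually) (auto simp: eventually_sequentially)
  ultimately show ?thesis unfolding y_def using LIMSEQ_unique by blast
qed



definition sqhyp :: "('h::{real_inner,complete_space} \<Rightarrow> 'h) \<Rightarrow> bool" where
  "sqhyp A \<longleftrightarrow> bounded_linear A \<and> (\<forall>x. norm (A x)^2 \<le> inner x (A x))"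

definition Bf :: "('h::{real_inner,complete_space} \<Rightarrow> 'h) \<Rightarrow> 'h \<Rightarrow> 'h" where
  "Bf A = (\<lambda>x. x - A x)"

definition rt :: "('h::{real_inner,complete_space} \<Rightarrow> 'h) \<Rightarrow> 'h \<Rightarrow> 'h" where
  "rt A = SQ (Bf A)"

lemma Bf_nbop: assumes "sqhyp A" shows "nbop (Bf A)"
  unfolding nbop_def
proof (intro conjI allI)
  have bl: "bounded_linear A" using assms by (auto simp: sqhyp_def)
  show "bounded_linear (Bf A)" unfolding Bf_def by (intro bounded_linear_sub bounded_linear_ident bl)
  fix x
  have h: "norm (A x)^2 \<le> inner x (A x)" using assms by (auto simp: sqhyp_def)
  have "norm (x - A x)^2 = inner x x - 2 * inner x (A x) + norm (A x)^2"
    by (simp only: power2_norm_eq_inner) (simp add: inner_diff inner_commute)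
  also have "\<dots> \<le> inner x x" using h by (smt (verit) zero_le_power2)
  also have "\<dots> = (norm x)^2" by (simp add: power2_norm_eq_inner)
  finally have "norm (x - A x) \<le> norm x" by (rule power2_le_imp_le) simp
  thus "norm (Bf A x) \<le> norm x" by (simp add: Bf_def)
qed

lemma rt_bl: "sqhyp A \<Longrightarrow> bounded_linear (rt A)"
  unfolding rt_def by (rule SQ_bl[OF Bf_nbop])

lemma rt_sq: assumes "sqhyp A" shows "rt A (rt A x) = A x"
  unfolding rt_def using SQ_sq[OF Bf_nbop[OF assms]] by (simp add: Bf_def)

lemma rt_intertw:
  assumes "sqhyp A" "sqhyp A'" "bounded_linear C" "\<And>x. A (C x) = C (A' x)"
  shows "rt A (C x) = C (rt A' x)"
proof -
  have "Bf A (C y) = C (Bf A' y)" for y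
    unfolding Bf_def using assms(4) linear_diff[OF bounded_linear.linear[OF assms(3)]] by simp
  thus ?thesis unfolding rt_def
    by (intro SQ_intertw Bf_nbop assms(1,2,3))
qed

lemma Bf_pow_isadj:
  assumes "bounded_linear A" "isadj A A"
  shows "inner ((Bf A ^^ n) x) y = inner x ((Bf A ^^ n) y)"
proof (induction n arbitrary: x y)
  case 0 thus ?case by simp
next
  case (Suc n)
  have "inner ((Bf A ^^ Suc n) x) y = inner ((Bf A ^^ n) x - A ((Bf A ^^ n) x)) y"
    by (simp add: Bf_def)
  also have "\<dots> = inner ((Bf A ^^ n) x) (y - A y)"
    using assms(2) unfolding isadj_def by (simp add: inner_diff)
  also have "\<dots> = inner x ((Bf A ^^ n) (y - A y))" by (rule Suc)
  also have "\<dots> = inner x ((Bf A ^^ Suc n) y)"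
    by (simp add: Bf_def funpow_Suc_right del: funpow.simps)
  finally show ?case .
qed

lemma rt_selfadj: assumes "sqhyp A" "isadj A A" shows "isadj (rt A) (rt A)"
  unfolding isadj_def
proof (intro allI)
  fix x y
  have bl: "bounded_linear A" using assms by (simp add: sqhyp_def)
  have "inner (rt A x) y = (\<Sum>n. sqc n * inner ((Bf A ^^ n) x) y)"
    unfolding rt_def by (rule SQ_functional(1)[OF Bf_nbop[OF assms(1)] bounded_linear_inner_left])
  also have "\<dots> = (\<Sum>n. sqc n * inner x ((Bf A ^^ n) y))"
    by (simp add: Bf_pow_isadj[OF bl assms(2)])
  also have "\<dots> = inner x (rt A y)"
    unfolding rt_def by (rule SQ_functional(1)[OF Bf_nbop[OF assms(1)] bounded_linear_inner_right, symmetric])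
  finally show "inner (rt A x) y = inner x (rt A y)" .
qed

lemma rt_pos: assumes "sqhyp A" shows "inner x (rt A x) \<ge> 0"
proof -
  define t where "t n = inner x ((Bf A ^^ n) x)" for n
  have nb: "nbop (Bf A)" by (rule Bf_nbop[OF assms])
  have tb: "\<bar>t n\<bar> \<le> norm x ^2" for n
  proof -
    have "\<bar>t n\<bar> \<le> norm x * norm ((Bf A ^^ n) x)" unfolding t_def by (rule Cauchy_Schwarz_ineq2)
    also have "\<dots> \<le> norm x * norm x" by (intro mult_left_mono pow_norm[OF nb]) simp
    finally show ?thesis by (simp add: power2_eq_square)
  qed
  have eq: "inner x (rt A x) = (\<Sum>n. sqc n * t n)"
    unfolding rt_def t_def by (rule SQ_functional(1)[OF nb bounded_linear_inner_right])
  have sm: "summable (\<lambda>n. sqc n * t n)"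
    unfolding t_def by (rule SQ_functional(2)[OF nb bounded_linear_inner_right])
  have t0: "t 0 = norm x ^2" by (simp add: t_def power2_norm_eq_inner)
  have "(\<Sum>n. sqc (Suc n) * t (Suc n)) = (\<Sum>n. sqc n * t n) - sqc 0 * t 0"
    by (rule suminf_split_head[OF sm])
  hence "(\<Sum>n. sqc n * t n) = norm x ^2 + (\<Sum>n. sqc (Suc n) * t (Suc n))" using t0 by simp
  moreover have "(\<Sum>n. - (\<bar>sqc (Suc n)\<bar> * norm x ^2)) \<le> (\<Sum>n. sqc (Suc n) * t (Suc n))"
  proof (rule suminf_le)
    fix n
    have "\<bar>sqc (Suc n) * t (Suc n)\<bar> \<le> \<bar>sqc (Suc n)\<bar> * norm x ^2"
      using tb[of "Suc n"] by (simp add: abs_mult mult_left_mono)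
    thus "- (\<bar>sqc (Suc n)\<bar> * norm x ^2) \<le> sqc (Suc n) * t (Suc n)" by linarith
    show "summable (\<lambda>n. - (\<bar>sqc (Suc n)\<bar> * norm x ^2))"
      by (intro summable_minus summable_mult2 sqc_shift_summable)
    show "summable (\<lambda>n. sqc (Suc n) * t (Suc n))" using summable_Suc_iff[of "\<lambda>n. sqc n * t n"] sm by simp
  qed
  moreover have "(\<Sum>n. - (\<bar>sqc (Suc n)\<bar> * norm x ^2)) = - ((\<Sum>n. \<bar>sqc (Suc n)\<bar>) * norm x ^2)"
  proof -
    have "summable (\<lambda>n. \<bar>sqc (Suc n)\<bar> * norm x ^2)" by (intro summable_mult2 sqc_shift_summable)
    thus ?thesis by (simp add: suminf_minus suminf_mult2[OF sqc_shift_summable])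
  qed
  moreover have "(\<Sum>n. \<bar>sqc (Suc n)\<bar>) * norm x ^2 \<le> 1 * norm x ^2"
    by (intro mult_right_mono sqc_shift_sum_le) simp
  ultimately show ?thesis using eq by linarith
qed



definition adj :: "('h::real_inner \<Rightarrow> 'h) \<Rightarrow> 'h \<Rightarrow> 'h" where
  "adj T = (SOME S. isadj S T)"

lemma adj_isadj: "bounded_linear (T::'h::{real_inner,complete_space} \<Rightarrow> 'h) \<Longrightarrow> isadj (adj T) T"
  unfolding adj_def using adj_exists someI_ex by metis

lemma adj_eq: "bounded_linear (T::'h::{real_inner,complete_space} \<Rightarrow> 'h) \<Longrightarrow> isadj S T \<Longrightarrow> adj T = S"
  by (erule isadj_unique[OF adj_isadj])

lemma adj_bl: assumes "bounded_linear (T::'h::{real_inner,complete_space} \<Rightarrow> 'h)" shows "bounded_linear (adj T)"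
  by (rule isadj_bl[OF adj_isadj[OF assms] assms])

lemma adj_adj: assumes "bounded_linear (T::'h::{real_inner,complete_space} \<Rightarrow> 'h)" shows "adj (adj T) = T"
  by (rule adj_eq[OF adj_bl[OF assms] isadj_sym[OF adj_isadj[OF assms]]])

lemma adj_inner: "bounded_linear (T::'h::{real_inner,complete_space} \<Rightarrow> 'h) \<Longrightarrow> inner (adj T x) y = inner x (T y)"
  using adj_isadj unfolding isadj_def by blast

lemma adj_inner2: "bounded_linear (T::'h::{real_inner,complete_space} \<Rightarrow> 'h) \<Longrightarrow> inner x (adj T y) = inner (T x) y"
  using adj_isadj[THEN isadj_sym] unfolding isadj_def
  by (metis adj_bl adj_adj adj_inner)

lemma isadj_comp: "isadj S T \<Longrightarrow> isadj S' T' \<Longrightarrow> isadj (S' \<circ> S) (T \<circ> T')"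
  unfolding isadj_def by simp

lemma cs_add: "cstruct J \<Longrightarrow> J (a + b) = J a + J b" using cs_linear linear_add by metis
lemma cs_diff: "cstruct J \<Longrightarrow> J (a - b) = J a - J b" using cs_linear linear_diff by metis
lemma cs_scale: "cstruct J \<Longrightarrow> J (r *\<^sub>R a) = r *\<^sub>R J a" using cs_linear linear_scale by metis
lemma cs_zero: "cstruct J \<Longrightarrow> J 0 = 0" using cs_linear linear_0 by metis
lemma cs_minus: "cstruct J \<Longrightarrow> J (- a) = - J a" using cs_linear linear_neg by metis

lemma cbounded_bl: "cbounded J T \<Longrightarrow> bounded_linear T" by (simp add: cbounded_def)
lemma cbounded_J: "cbounded J T \<Longrightarrow> T (J x) = J (T x)" by (simp add: cbounded_def)

lemma cbounded_comp: "cbounded J S \<Longrightarrow> cbounded J T \<Longrightarrow> cbounded J (S \<circ> T)"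
  unfolding cbounded_def by (auto simp: o_def intro: bounded_linear_compose)

lemma cbounded_comp': "cbounded J S \<Longrightarrow> cbounded J T \<Longrightarrow> cbounded J (\<lambda>x. S (T x))"
  using cbounded_comp[of J S T] by (simp add: o_def)

lemma cbounded_id: "cbounded J id" "cbounded J (\<lambda>x. x)"
  unfolding cbounded_def by (auto simp: id_def bounded_linear_ident)

lemma cbounded_add: "cstruct J \<Longrightarrow> cbounded J S \<Longrightarrow> cbounded J T \<Longrightarrow> cbounded J (\<lambda>x. S x + T x)"
  unfolding cbounded_def by (auto simp: cs_add intro: bounded_linear_add)

lemma cbounded_diff: "cstruct J \<Longrightarrow> cbounded J S \<Longrightarrow> cbounded J T \<Longrightarrow> cbounded J (\<lambda>x. S x - T x)"
  unfolding cbounded_def by (auto simp: cs_diff intro: bounded_linear_sub)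

lemma cbounded_scaleR: "cstruct J \<Longrightarrow> cbounded J T \<Longrightarrow> cbounded J (\<lambda>x. r *\<^sub>R T x)"
  unfolding cbounded_def by (auto simp: cs_scale intro: bounded_linear_compose[OF bounded_linear_scaleR_right])

lemma cbounded_zero: "cstruct J \<Longrightarrow> cbounded J (\<lambda>x. 0)"
  unfolding cbounded_def by (auto simp: cs_zero intro: bounded_linear_zero)

lemma cbounded_J_self: "cstruct J \<Longrightarrow> cbounded J J"
  unfolding cbounded_def using cs_bl by auto

lemma cbounded_cscale: "cstruct J \<Longrightarrow> cbounded J T \<Longrightarrow> cbounded J (cscale J c T)"
  unfolding cscale_def
  by (intro cbounded_add cbounded_scaleR cbounded_comp'[OF cbounded_J_self]) auto

lemma cbounded_adj:
  fixes T :: "'h::{real_inner,complete_space} \<Rightarrow> 'h"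
  assumes J: "cstruct J" and T: "cbounded J T" shows "cbounded J (adj T)"
  unfolding cbounded_def
proof (intro conjI allI)
  have bl: "bounded_linear T" using T by (simp add: cbounded_def)
  show "bounded_linear (adj T)" by (rule adj_bl[OF bl])
  fix x
  have "inner (adj T (J x) - J (adj T x)) y = 0" for y
  proof -
    have "inner (adj T (J x)) y = inner (J x) (T y)" by (rule adj_inner[OF bl])
    also have "\<dots> = - inner x (J (T y))" by (rule cs_skew[OF J])
    also have "\<dots> = - inner x (T (J y))" using T by (simp add: cbounded_def)
    also have "\<dots> = - inner (adj T x) (J y)" by (simp add: adj_inner[OF bl])
    also have "\<dots> = inner (J (adj T x)) y" by (simp add: cs_skew[OF J])
    finally show ?thesis by (simp add: inner_diff_left)
  qed
  from this[of "adj T (J x) - J (adj T x)"] show "adj T (J x) = J (adj T x)" by simp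
qed

lemma cadj_eq:
  fixes T :: "'h::{real_inner,complete_space} \<Rightarrow> 'h"
  assumes J: "cstruct J" and T: "cbounded J T" shows "cadj J T = adj T"
proof -
  have bl: "bounded_linear T" using T by (simp add: cbounded_def)
  have P: "\<forall>x y. cinner J (adj T x) y = cinner J x (T y)"
    unfolding cinner_def using T by (simp add: adj_inner[OF bl] cbounded_def)
  show ?thesis unfolding cadj_def
  proof (rule the_equality)
    show "\<forall>x y. cinner J (adj T x) y = cinner J x (T y)" by (rule P)
    fix S assume "\<forall>x y. cinner J (S x) y = cinner J x (T y)"
    hence "\<forall>x y. Re (cinner J (S x) y) = Re (cinner J x (T y))" by simp
    hence "isadj S T" unfolding isadj_def cinner_def by simp
    thus "S = adj T" using adj_eq[OF bl] by simp
  qed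
qed

lemma isadj_cscale:
  assumes J: "cstruct J" and "isadj S T" "\<And>x. T (J x) = J (T x)"
  shows "isadj (cscale J (cnj c) S) (cscale J c T)"
  unfolding isadj_def cscale_def
proof (intro allI)
  fix x y
  have "inner (J (S x)) y = - inner (S x) (J y)" by (rule cs_skew[OF J])
  also have "\<dots> = - inner x (T (J y))" using assms(2) by (simp add: isadj_def)
  also have "\<dots> = - inner x (J (T y))" by (simp add: assms(3))
  finally have e: "inner (J (S x)) y = - inner x (J (T y))" .
  have e2: "inner (S x) y = inner x (T y)" using assms(2) by (simp add: isadj_def)
  show "inner (Re (cnj c) *\<^sub>R S x + Im (cnj c) *\<^sub>R J (S x)) y = inner x (Re c *\<^sub>R T y + Im c *\<^sub>R J (T y))"
    using e e2 by (simp add: inner_add inner_diff_left inner_scaleR_left inner_scaleR_right)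
qed

lemma dense_eq:
  fixes f g :: "'a::topological_space \<Rightarrow> 'b::t2_space"
  assumes "closure S = UNIV" "continuous_on UNIV f" "continuous_on UNIV g" "\<And>y. y \<in> S \<Longrightarrow> f y = g y"
  shows "f y = g y"
proof -
  have "closure S \<subseteq> {x. f x = g x}"
    by (rule closure_minimal) (use assms closed_Collect_eq in auto)
  thus ?thesis using assms(1) by auto
qed

lemma subspace_closure:
  fixes S :: "'a::real_normed_vector set"
  assumes "subspace S" shows "subspace (closure S)"
  unfolding subspace_def
proof (intro conjI ballI allI)
  show "0 \<in> closure S" using assms closure_subset subspace_0 by blast
  fix x y assume "x \<in> closure S" "y \<in> closure S"
  then obtain f g where f: "\<And>n. f n \<in> S" "f \<longlonglongrightarrow> x" and g: "\<And>n. g n \<in> S" "g \<longlonglongrightarrow> y"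
    unfolding closure_sequential by metis
  have "(\<lambda>n. f n + g n) \<longlonglongrightarrow> x + y" by (intro tendsto_intros f g)
  moreover have "f n + g n \<in> S" for n using f g assms by (simp add: subspace_add)
  ultimately show "x + y \<in> closure S" unfolding closure_sequential by (intro exI[of _ "\<lambda>n. f n + g n"]) simp
next
  fix c :: real and x assume "x \<in> closure S"
  then obtain f where f: "\<And>n. f n \<in> S" "f \<longlonglongrightarrow> x"
    unfolding closure_sequential by metis
  have "(\<lambda>n. c *\<^sub>R f n) \<longlonglongrightarrow> c *\<^sub>R x" by (intro tendsto_intros f)
  moreover have "c *\<^sub>R f n \<in> S" for n using f assms by (simp add: subspace_scale)
  ultimately show "c *\<^sub>R x \<in> closure S" unfolding closure_sequential by (intro exI[of _ "\<lambda>n. c *\<^sub>R f n"]) simp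
qed

lemma selfadj_dense:
  fixes Z :: "'h::{real_inner,complete_space} \<Rightarrow> 'h"
  assumes bl: "bounded_linear Z" and sa: "isadj Z Z" and inj: "\<And>x. Z x = 0 \<Longrightarrow> x = 0"
  shows "closure (range Z) = UNIV"
proof -
  have sub: "subspace (range Z)"
    by (rule linear_subspace_image[OF bounded_linear.linear[OF bl] subspace_UNIV])
  have "y \<in> closure (range Z)" for y
  proof -
    obtain p where p: "p \<in> closure (range Z)" "\<forall>m\<in>closure (range Z). inner (y - p) m = 0"
      using projection_exists[OF closed_closure subspace_closure[OF sub]] by blast
    have "inner (Z (y - p)) x = 0" for x
    proof -
      have "Z x \<in> closure (range Z)" using closure_subset[of "range Z"] by (simp add: subset_iff)
      hence "inner (y - p) (Z x) = 0" using p(2) by simp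
      thus ?thesis using sa unfolding isadj_def by simp
    qed
    from this[of "Z (y - p)"] have "Z (y - p) = 0" by simp
    hence "y - p = 0" by (rule inj)
    hence "y = p" by simp
    thus ?thesis using p by simp
  qed
  thus ?thesis by auto
qed

lemma right_cancel:
  fixes F G Z :: "'h::{real_inner,complete_space} \<Rightarrow> 'h"
  assumes "closure (range Z) = UNIV" "bounded_linear F" "bounded_linear G" "\<And>x. F (Z x) = G (Z x)"
  shows "F = G"
proof
  fix y show "F y = G y"
    by (rule dense_eq[OF assms(1) linear_continuous_on[OF assms(2)] linear_continuous_on[OF assms(3)]]) (use assms(4) in auto)
qed

section \<open>Extension by continuity\<close>

lemma extend_op:
  fixes Z R :: "'h::{real_inner,complete_space} \<Rightarrow> 'h"
  assumes blZ: "bounded_linear Z" and dense: "closure (range Z) = UNIV" and inj: "\<And>x. Z x = 0 \<Longrightarrow> x = 0"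
    and blR: "bounded_linear R" and K: "\<And>x. norm (R x) \<le> K * norm (Z x)"
  shows "\<exists>W. bounded_linear W \<and> (\<forall>x. W (Z x) = R x)"
proof -
  have injZ: "inj Z"
    by (rule injI) (metis inj linear_diff[OF bounded_linear.linear[OF blZ]] eq_iff_diff_eq_0)
  define f where "f = (\<lambda>y. R (inv Z y))"
  have fZ: "f (Z x) = R x" for x unfolding f_def using injZ by simp
  define K' where "K' = max K 0"
  have K': "norm (R x) \<le> K' * norm (Z x)" for x
    using K[of x] by (simp add: K'_def) (smt (verit) mult_right_mono norm_ge_zero)
  have K'0: "K' \<ge> 0" by (simp add: K'_def)
  have uc: "uniformly_continuous_on (range Z) f"
    unfolding uniformly_continuous_on_def
  proof (intro allI impI)
    fix e :: real assume e: "e > 0"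
    show "\<exists>d>0. \<forall>x\<in>range Z. \<forall>x'\<in>range Z. dist x' x < d \<longrightarrow> dist (f x') (f x) < e"
    proof (intro exI[of _ "e / (K' + 1)"] conjI ballI impI)
      show "e / (K' + 1) > 0" using e K'0 by simp
      fix y y' assume yy: "y \<in> range Z" "y' \<in> range Z" "dist y' y < e / (K' + 1)"
      then obtain a a' where a: "y = Z a" "y' = Z a'" by auto
      have "dist (f y') (f y) = norm (R (a' - a))"
        using a fZ by (simp add: dist_norm linear_diff[OF bounded_linear.linear[OF blR]])
      also have "\<dots> \<le> K' * norm (Z (a' - a))" by (rule K')
      also have "\<dots> = K' * dist y' y" using a by (simp add: dist_norm linear_diff[OF bounded_linear.linear[OF blZ]])
      also have "\<dots> \<le> K' * (e / (K' + 1))" using yy(3) K'0 by (intro mult_left_mono) auto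
      also have "\<dots> < e" using e K'0 by (simp add: field_simps)
      finally show "dist (f y') (f y) < e" .
    qed
  qed
  obtain g where g: "uniformly_continuous_on (closure (range Z)) g" "\<And>y. y \<in> range Z \<Longrightarrow> f y = g y"
    using uniformly_continuous_on_extension_on_closure[OF uc] by metis
  have cg: "continuous_on UNIV g" using g(1) dense uniformly_continuous_imp_continuous by metis
  have gZ: "g (Z x) = R x" for x using g(2) fZ by (metis rangeI)
  have add1: "g (Z a + y) = g (Z a) + g y" for a y
    by (rule dense_eq[OF dense, of "\<lambda>y. g (Z a + y)" "\<lambda>y. g (Z a) + g y"])
       (auto intro!: continuous_intros continuous_on_compose2[OF cg]
         simp: gZ linear_add[OF bounded_linear.linear[OF blZ], symmetric] linear_add[OF bounded_linear.linear[OF blR]] cg)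
  have add: "g (x + y) = g x + g y" for x y
    by (rule dense_eq[OF dense, of "\<lambda>x. g (x + y)" "\<lambda>x. g x + g y"])
       (auto intro!: continuous_intros continuous_on_compose2[OF cg] simp: add1 cg)
  have sc: "g (r *\<^sub>R x) = r *\<^sub>R g x" for r x
    by (rule dense_eq[OF dense, of "\<lambda>x. g (r *\<^sub>R x)" "\<lambda>x. r *\<^sub>R g x"])
       (auto intro!: continuous_intros continuous_on_compose2[OF cg]
         simp: gZ linear_scale[OF bounded_linear.linear[OF blZ], symmetric] linear_scale[OF bounded_linear.linear[OF blR]] cg)
  have bd: "norm (g x) \<le> norm x * K'" for x
  proof -
    have "closure (range Z) \<subseteq> {x. norm (g x) \<le> norm x * K'}"
    proof (rule closure_minimal)
      show "range Z \<subseteq> {x. norm (g x) \<le> norm x * K'}" using K' gZ by (auto simp: mult.commute)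
      show "closed {x. norm (g x) \<le> norm x * K'}"
        by (rule closed_Collect_le) (auto intro!: continuous_intros continuous_on_compose2[OF cg] simp: cg)
    qed
    thus ?thesis using dense by auto
  qed
  have "bounded_linear g" by (rule bounded_linear_intro[OF add sc bd])
  thus ?thesis using gZ by blast
qed



lemma mon_apply: "mon u w = (if w = u then 1 else 0)" by (simp add: mon_def)

lemma pmul_mon: "pmul (mon u) (mon v) = mon (u @ v)"
proof
  fix w
  have eq: "(take k w = u \<and> drop k w = v) \<longleftrightarrow> (k = length u \<and> w = u @ v)" if "k \<le> length w" for k
  proof
    assume a: "take k w = u \<and> drop k w = v"
    hence "w = u @ v" by (metis append_take_drop_id)
    moreover have "length u = k" using a that by auto
    ultimately show "k = length u \<and> w = u @ v" by simp
  next
    assume "k = length u \<and> w = u @ v" thus "take k w = u \<and> drop k w = v" by simp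
  qed
  have "pmul (mon u) (mon v) w = (\<Sum>k\<le>length w. if k = length u \<and> w = u @ v then 1 else 0)"
    unfolding pmul_def mon_def by (rule sum.cong) (use eq in auto)
  also have "\<dots> = (if w = u @ v then 1 else 0)"
    by (cases "w = u @ v") (auto simp: sum.delta)
  finally show "pmul (mon u) (mon v) w = mon (u @ v) w" by (simp add: mon_def)
qed

lemma pmul_padd_left: "pmul (padd f g) h = padd (pmul f h) (pmul g h)"
  unfolding pmul_def padd_def by (simp add: distrib_right sum.distrib)
lemma pmul_padd_right: "pmul h (padd f g) = padd (pmul h f) (pmul h g)"
  unfolding pmul_def padd_def by (simp add: distrib_left sum.distrib)
lemma pmul_pdiff_left: "pmul (pdiff f g) h = pdiff (pmul f h) (pmul g h)"
  unfolding pmul_def pdiff_def by (simp add: left_diff_distrib sum_subtractf)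
lemma pmul_pdiff_right: "pmul h (pdiff f g) = pdiff (pmul h f) (pmul h g)"
  unfolding pmul_def pdiff_def by (simp add: right_diff_distrib sum_subtractf)
lemma pmul_psc_left: "pmul (psc c f) h = psc c (pmul f h)"
  unfolding pmul_def psc_def by (simp add: sum_distrib_left mult.assoc)
lemma pmul_psc_right: "pmul h (psc c f) = psc c (pmul h f)"
  unfolding pmul_def psc_def by (simp add: sum_distrib_left mult.left_commute)

lemma wstar_append: "wstar (u @ v) = wstar v @ wstar u" by (simp add: wstar_def)
lemma wstar_wstar[simp]: "wstar (wstar w) = w"
  unfolding wstar_def rev_map[symmetric] by (induction w) auto
lemma wstar_inj: "wstar u = wstar v \<longleftrightarrow> u = v" by (metis wstar_wstar)

lemma pstar_mon: "pstar (mon w) = mon (wstar w)"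
proof
  fix v
  have "wstar v = w \<longleftrightarrow> v = wstar w" by (metis wstar_wstar)
  thus "pstar (mon w) v = mon (wstar w) v" by (simp add: pstar_def mon_def)
qed
lemma pstar_padd: "pstar (padd f g) = padd (pstar f) (pstar g)" by (simp add: pstar_def padd_def)
lemma pstar_pdiff: "pstar (pdiff f g) = pdiff (pstar f) (pstar g)" by (simp add: pstar_def pdiff_def)
lemma pstar_psc: "pstar (psc c f) = psc (cnj c) (pstar f)" by (simp add: pstar_def psc_def)
lemma pstar_pstar: "pstar (pstar f) = f" by (simp add: pstar_def)

lemmas poly_simps = pmul_mon pmul_padd_left pmul_padd_right pmul_pdiff_left pmul_pdiff_right
  pmul_psc_left pmul_psc_right pstar_mon pstar_padd pstar_pdiff pstar_psc

lemma fsupp_mon: "fsupp (mon w)"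
proof -
  have "{v. mon w v \<noteq> 0} \<subseteq> {w}" by (auto simp: mon_def)
  thus ?thesis unfolding fsupp_def using finite_subset by blast
qed
lemma fsupp_padd: "fsupp f \<Longrightarrow> fsupp g \<Longrightarrow> fsupp (padd f g)"
  unfolding fsupp_def padd_def by (rule finite_subset[of _ "{w. f w \<noteq> 0} \<union> {w. g w \<noteq> 0}"]) auto
lemma fsupp_pdiff: "fsupp f \<Longrightarrow> fsupp g \<Longrightarrow> fsupp (pdiff f g)"
  unfolding fsupp_def pdiff_def by (rule finite_subset[of _ "{w. f w \<noteq> 0} \<union> {w. g w \<noteq> 0}"]) auto
lemma fsupp_psc: "fsupp f \<Longrightarrow> fsupp (psc c f)"
  unfolding fsupp_def psc_def by (rule finite_subset[of _ "{w. f w \<noteq> 0}"]) auto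
lemma fsupp_pstar: "fsupp f \<Longrightarrow> fsupp (pstar f)"
proof -
  assume f: "fsupp f"
  have "{w. pstar f w \<noteq> 0} = wstar ` {w. f w \<noteq> 0}"
    unfolding pstar_def by (auto simp: image_iff) (metis wstar_wstar)
  thus ?thesis using f unfolding fsupp_def by simp
qed
lemma fsupp_pmul: "fsupp f \<Longrightarrow> fsupp g \<Longrightarrow> fsupp (pmul f g)"
proof -
  assume f: "fsupp f" and g: "fsupp g"
  let ?F = "{w. f w \<noteq> 0}" and ?G = "{w. g w \<noteq> 0}"
  have "{w. pmul f g w \<noteq> 0} \<subseteq> (\<lambda>(u,v). u @ v) ` (?F \<times> ?G)"
  proof
    fix w assume "w \<in> {w. pmul f g w \<noteq> 0}"
    then obtain k where "f (take k w) * g (drop k w) \<noteq> 0" unfolding pmul_def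
      by (metis (mono_tags, lifting) mem_Collect_eq sum.neutral)
    hence m: "(take k w, drop k w) \<in> ?F \<times> ?G" by auto
    have "w = (\<lambda>(u,v). u @ v) (take k w, drop k w)" by simp
    from this m show "w \<in> (\<lambda>(u,v). u @ v) ` (?F \<times> ?G)" by (rule image_eqI)
  qed
  moreover have "finite ((\<lambda>(u,v). u @ v) ` (?F \<times> ?G))" using f g unfolding fsupp_def by simp
  ultimately show ?thesis unfolding fsupp_def using finite_subset by blast
qed
lemma fsupp_z: "fsupp (z i)" "fsupp (zs i)" "fsupp (p i j)" "fsupp pone"
  by (simp_all add: z_def zs_def p_def pone_def fsupp_mon)

lemma S5_rels_fsupp: "r \<in> S5_rels q \<Longrightarrow> fsupp r"
  unfolding S5_rels_def comm_def
  by (auto intro!: fsupp_pdiff fsupp_pmul fsupp_psc fsupp_padd fsupp_z)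

lemma S5_ideal_fsupp: "f \<in> S5_ideal q \<Longrightarrow> fsupp f"
  by (induction rule: S5_ideal.induct)
     (auto intro: S5_rels_fsupp fsupp_padd fsupp_psc fsupp_pmul fsupp_pstar)

lemma CP2_fsupp: "f \<in> CP2_alg \<Longrightarrow> fsupp f"
  by (induction rule: CP2_alg.induct) (auto intro: fsupp_z fsupp_padd fsupp_psc fsupp_pmul fsupp_pstar)

definition rA :: "real \<Rightarrow> gen \<Rightarrow> gen \<Rightarrow> poly" where
  "rA q i j = pdiff (pmul (z i) (z j)) (psc (of_real q) (pmul (z j) (z i)))"
definition rB :: "real \<Rightarrow> gen \<Rightarrow> gen \<Rightarrow> poly" where
  "rB q i j = pdiff (pmul (zs i) (z j)) (psc (of_real q) (pmul (z j) (zs i)))"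
definition rAs :: "real \<Rightarrow> gen \<Rightarrow> gen \<Rightarrow> poly" where
  "rAs q i j = pstar (rA q i j)"
definition rC :: poly where "rC = comm (zs G1) (z G1)"
definition rD :: "real \<Rightarrow> poly" where
  "rD q = pdiff (comm (zs G2) (z G2)) (psc (of_real (1 - q\<^sup>2)) (pmul (z G1) (zs G1)))"
definition rE :: "real \<Rightarrow> poly" where
  "rE q = pdiff (comm (zs G3) (z G3))
        (psc (of_real (1 - q\<^sup>2)) (padd (pmul (z G1) (zs G1)) (pmul (z G2) (zs G2))))"
definition rF :: poly where
  "rF = pdiff (padd (padd (pmul (z G1) (zs G1)) (pmul (z G2) (zs G2))) (pmul (z G3) (zs G3))) pone"

lemma rA_in: "gnum i < gnum j \<Longrightarrow> rA q i j \<in> S5_ideal q"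
  unfolding rA_def by (rule S5_ideal.rel) (auto simp: S5_rels_def)
lemma rAs_in: "gnum i < gnum j \<Longrightarrow> rAs q i j \<in> S5_ideal q"
  unfolding rAs_def by (rule S5_ideal.star[OF rA_in])
lemma rB_in: "i \<noteq> j \<Longrightarrow> rB q i j \<in> S5_ideal q"
  unfolding rB_def by (rule S5_ideal.rel) (auto simp: S5_rels_def)
lemma rC_in: "rC \<in> S5_ideal q"
  unfolding rC_def by (rule S5_ideal.rel) (auto simp: S5_rels_def)
lemma rD_in: "rD q \<in> S5_ideal q"
  unfolding rD_def by (rule S5_ideal.rel) (auto simp: S5_rels_def)
lemma rE_in: "rE q \<in> S5_ideal q"
  unfolding rE_def by (rule S5_ideal.rel) (auto simp: S5_rels_def)
lemma rF_in: "rF \<in> S5_ideal q"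
  unfolding rF_def by (rule S5_ideal.rel) (auto simp: S5_rels_def)

definition cg :: "complex \<Rightarrow> letter list \<Rightarrow> poly \<Rightarrow> letter list \<Rightarrow> poly" where
  "cg c u r v = psc c (pmul (pmul (mon u) r) (mon v))"

lemma cg_in: "r \<in> S5_ideal q \<Longrightarrow> cg c u r v \<in> S5_ideal q"
  unfolding cg_def by (intro S5_ideal.sc S5_ideal.rmul S5_ideal.lmul fsupp_mon)

lemma zero_in: "(\<lambda>w. 0) \<in> S5_ideal q"
proof -
  have "psc 0 rF \<in> S5_ideal q" by (rule S5_ideal.sc[OF rF_in])
  moreover have "psc 0 rF = (\<lambda>w. 0)" by (simp add: psc_def)
  ultimately show ?thesis by simp
qed

lemma poly_eq_on:
  fixes f g :: poly
  assumes "\<And>w. w \<notin> W \<Longrightarrow> f w = 0" "\<And>w. w \<notin> W \<Longrightarrow> g w = 0" "\<forall>w\<in>W. f w = g w"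
  shows "f = g"
  using assms by (metis ext)

lemma pow4_sq: "(x::complex)^4 = x*x*x*x" by (simp add: power_numeral_even power2_eq_square Let_def mult.assoc)

lemmas rel_defs = rA_def rB_def rAs_def rC_def rD_def rE_def rF_def comm_def z_def zs_def p_def pone_def cg_def


lemma E1: assumes q0: "q \<noteq> 0"
  shows "pdiff (p G1 G1) (padd (padd (pmul (p G1 G1) (p G1 G1)) (pmul (p G1 G2) (p G2 G1))) (pmul (p G1 G3) (p G3 G1))) \<in> S5_ideal q"
proof -
  have eq: "pdiff (p G1 G1) (padd (padd (pmul (p G1 G1) (p G1 G1)) (pmul (p G1 G2) (p G2 G1))) (pmul (p G1 G3) (p G3 G1))) = (padd (cg ((1)) [] rC []) (padd (cg ((-1)) [] rC [(G1, True), (G1, False)]) (padd (cg ((-1)) [] (rB q G1 G2) [(G2, True), (G1, False)]) (padd (cg ((-1)) [] (rB q G1 G3) [(G3, True), (G1, False)]) (padd (cg ((-1)) [(G1, False), (G1, True)] rC []) (padd (cg ((-1)) [(G1, False)] rC [(G1, True)]) (padd (cg ((-1) * (complex_of_real q)^1) [(G2, False), (G1, True)] (rB q G2 G1) []) (padd (cg ((-1) * (complex_of_real q)^2) [(G2, False)] rC [(G2, True)]) (padd (cg ((1) * (complex_of_real q)^1) [] (rA q G1 G2) [(G1, True), (G2, True)]) (padd (cg ((-1) * (complex_of_real q)^1) [(G3, False), (G1, True)] (rB q G3 G1) []) (padd (cg ((-1) * (complex_of_real q)^2) [(G3, False)] rC [(G3, True)]) (padd (cg ((1) * (complex_of_real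 q)^1) [] (rA q G1 G3) [(G1, True), (G3, True)]) (padd (cg ((-1)) [(G1, False), (G1, True)] rF []) (padd (cg ((1)) [(G1, False)] rC [(G1, True)]) (padd (cg ((1)) [(G1, False)] (rB q G1 G2) [(G2, True)]) (padd (cg ((1)) [(G1, False)] (rB q G1 G3) [(G3, True)]) (\<lambda>w. 0)))))))))))))))))"
    apply (rule poly_eq_on[where W = "{[(G1, True), (G1, False)], [(G1, True), (G1, False), (G1, True), (G1, False)], [(G1, True), (G2, False), (G2, True), (G1, False)], [(G1, True), (G3, False), (G3, True), (G1, False)], [(G1, False), (G1, True)], [(G1, False), (G1, True), (G1, True), (G1, False)], [(G1, False), (G1, True), (G1, False), (G1, True)], [(G1, False), (G1, True), (G2, False), (G2, True)], [(G1, False), (G1, True), (G3, False), (G3, True)], [(G1, False), (G1, False), (G1, True), (G1, True)], [(G1, False), (G2, False), (G1, True), (G2, True)], [(G1, False), (G3, False), (G1, True), (G3, True)], [(G2, False), (G1, True), (G2, True), (G1, False)], [(G2, False), (G1, True), (G1, False), (G2, True)], [(G2, False), (G1, False), (G1, True), (G2, True)], [(G3, False), (G1, True), (G3, True), (G1, False)], [(G3, False), (G1, True), (G1, False), (G3, True)], [(G3, False), (G1, False), (G1, True), (G3, True)]}"])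
    apply (simp_all only: rel_defs poly_simps)
    apply (simp_all add: pdiff_def padd_def psc_def mon_def wstar_def q0 field_simps power2_eq_square power3_eq_cube pow4_sq)
    done
  show ?thesis unfolding eq
    by (intro S5_ideal.add cg_in rA_in rAs_in rB_in rC_in rD_in rE_in rF_in zero_in; simp)
qed

lemma E2: assumes q0: "q \<noteq> 0"
  shows "pdiff (pmul (p G2 G1) (p G1 G2)) (psc (of_real (q^2)) (pmul (p G1 G1) (p G2 G2))) \<in> S5_ideal q"
proof -
  have eq: "pdiff (pmul (p G2 G1) (p G1 G2)) (psc (of_real (q^2)) (pmul (p G1 G1) (p G2 G2))) = (padd (cg ((1)) [] (rB q G2 G1) [(G1, True), (G2, False)]) (padd (cg ((1) * (complex_of_real q)^1) [(G1, False)] (rAs q G1 G2) [(G2, False)]) (padd (cg ((1) * (complex_of_real q)^2) [(G1, False), (G1, True)] (rD q) []) (padd (cg ((1) * (complex_of_real q)^2 + (-1) * (complex_of_real q)^4) [(G1, False)] rC [(G1, True)]) (padd (cg ((1) * (complex_of_real q)^2) [(G1, False)] (rB q G1 G2) [(G2, True)]) (padd (cg ((-1) * (complex_of_real q)^2) [] rC [(G2, True), (G2, False)]) (padd (cg ((-1) * (complex_of_real q)^2) [(G1, False), (G1, True)] (rD q) []) (padd (cg ((-1) * (complex_of_real q)^2 + (1) * (complex_of_real q)^4) [(G1, False)] rC [(G1, True)]) (padd (cg ((-1) * (complex_of_real q)^2) [(G1, False)] (rB q G1 G2) [(G2, True)]) (\<lambda>w. 0))))))))))"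
    apply (rule poly_eq_on[where W = "{[(G1, True), (G1, False), (G2, True), (G2, False)], [(G2, True), (G1, False), (G1, True), (G2, False)], [(G1, False), (G1, True), (G2, True), (G2, False)], [(G1, False), (G1, True), (G1, False), (G1, True)], [(G1, False), (G1, True), (G2, False), (G2, True)], [(G1, False), (G2, True), (G1, True), (G2, False)], [(G1, False), (G1, False), (G1, True), (G1, True)], [(G1, False), (G2, False), (G1, True), (G2, True)]}"])
    apply (simp_all only: rel_defs poly_simps)
    apply (simp_all add: pdiff_def padd_def psc_def mon_def wstar_def q0 field_simps power2_eq_square power3_eq_cube pow4_sq)
    done
  show ?thesis unfolding eq
    by (intro S5_ideal.add cg_in rA_in rAs_in rB_in rC_in rD_in rE_in rF_in zero_in; simp)
qed

lemma E3: assumes q0: "q \<noteq> 0"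
  shows "pdiff (pmul (p G3 G1) (p G1 G3)) (psc (of_real (q^2)) (pmul (p G1 G1) (p G3 G3))) \<in> S5_ideal q"
proof -
  have eq: "pdiff (pmul (p G3 G1) (p G1 G3)) (psc (of_real (q^2)) (pmul (p G1 G1) (p G3 G3))) = (padd (cg ((1)) [] (rB q G3 G1) [(G1, True), (G3, False)]) (padd (cg ((1) * (complex_of_real q)^1) [(G1, False)] (rAs q G1 G3) [(G3, False)]) (padd (cg ((1) * (complex_of_real q)^2) [(G1, False), (G1, True)] (rE q) []) (padd (cg ((1) * (complex_of_real q)^2 + (-1) * (complex_of_real q)^4) [(G1, False)] rC [(G1, True)]) (padd (cg ((1) * (complex_of_real q)^2 + (-1) * (complex_of_real q)^4) [(G1, False)] (rB q G1 G2) [(G2, True)]) (padd (cg ((1) * (complex_of_real q)^2) [(G1, False)] (rB q G1 G3) [(G3, True)]) (padd (cg ((-1) * (complex_of_real q)^2) [] rC [(G3, True), (G3, False)]) (padd (cg ((-1) * (complex_of_real q)^2) [(G1, False), (G1, True)] (rE q) []) (padd (cg ((-1) * (complex_of_real q)^2 + (1) * (complex_of_real q)^4) [(G1, False)] rC [(G1, True)]) (padd (cg ((-1) * (complex_of_real q)^2 + (1) * (complex_of_real q)^4) [(G1, False)] (rB q G1 G2) [(G2, True)]) (padd (cg ((-1) * (complex_of_real q)^2) [(G1, False)] (rB q G1 G3) [(G3, True)]) (\<lambda>w. 0))))))))))))"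
    apply (rule poly_eq_on[where W = "{[(G1, True), (G1, False), (G3, True), (G3, False)], [(G3, True), (G1, False), (G1, True), (G3, False)], [(G1, False), (G1, True), (G3, True), (G3, False)], [(G1, False), (G1, True), (G1, False), (G1, True)], [(G1, False), (G1, True), (G2, False), (G2, True)], [(G1, False), (G1, True), (G3, False), (G3, True)], [(G1, False), (G3, True), (G1, True), (G3, False)], [(G1, False), (G1, False), (G1, True), (G1, True)], [(G1, False), (G2, False), (G1, True), (G2, True)], [(G1, False), (G3, False), (G1, True), (G3, True)]}"])
    apply (simp_all only: rel_defs poly_simps)
    apply (simp_all add: pdiff_def padd_def psc_def mon_def wstar_def q0 field_simps power2_eq_square power3_eq_cube pow4_sq)
    done
  show ?thesis unfolding eq
    by (intro S5_ideal.add cg_in rA_in rAs_in rB_in rC_in rD_in rE_in rF_in zero_in; simp)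
qed

lemma E4: assumes q0: "q \<noteq> 0"
  shows "pdiff (pmul (p G1 G1) (p G2 G2)) (pmul (p G2 G2) (p G1 G1)) \<in> S5_ideal q"
proof -
  have eq: "pdiff (pmul (p G1 G1) (p G2 G2)) (pmul (p G2 G2) (p G1 G1)) = (padd (cg ((1)) [] rC [(G2, True), (G2, False)]) (padd (cg ((1)) [(G1, False), (G1, True)] (rD q) []) (padd (cg ((1) + (-1) * (complex_of_real q)^2) [(G1, False)] rC [(G1, True)]) (padd (cg ((1)) [(G1, False)] (rB q G1 G2) [(G2, True)]) (padd (cg ((-1)) [] (rD q) [(G1, True), (G1, False)]) (padd (cg ((-1) + (1) * (complex_of_real q)^2) [(G1, False), (G1, True)] rC []) (padd (cg ((-1) + (1) * (complex_of_real q)^2) [(G1, False)] rC [(G1, True)]) (padd (cg ((-1)) [(G2, False)] (rAs q G1 G2) [(G1, False)]) (padd (cg ((-1) * (complex_of_real q)^1) [(G2, False), (G1, True)] (rB q G2 G1) []) (padd (cg ((-1) * (complex_of_real q)^2) [(G2, False)] rC [(G2, True)]) (padd (cg ((1) * (complex_of_real q)^1) [] (rA q G1 G2) [(G1, True), (G2, True)]) (\<lambda>w. 0))))))))))))"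
    apply (rule poly_eq_on[where W = "{[(G1, True), (G1, False), (G2, True), (G2, False)], [(G2, True), (G2, False), (G1, True), (G1, False)], [(G1, False), (G1, True), (G1, True), (G1, False)], [(G1, False), (G1, True), (G2, True), (G2, False)], [(G1, False), (G1, True), (G1, False), (G1, True)], [(G1, False), (G1, True), (G2, False), (G2, True)], [(G1, False), (G1, False), (G1, True), (G1, True)], [(G1, False), (G2, False), (G1, True), (G2, True)], [(G2, False), (G1, True), (G2, True), (G1, False)], [(G2, False), (G1, True), (G1, False), (G2, True)], [(G2, False), (G2, True), (G1, True), (G1, False)], [(G2, False), (G1, False), (G1, True), (G2, True)]}"])
    apply (simp_all only: rel_defs poly_simps)
    apply (simp_all add: pdiff_def padd_def psc_def mon_def wstar_def q0 field_simps power2_eq_square power3_eq_cube pow4_sq)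
    done
  show ?thesis unfolding eq
    by (intro S5_ideal.add cg_in rA_in rAs_in rB_in rC_in rD_in rE_in rF_in zero_in; simp)
qed

lemma E5: assumes q0: "q \<noteq> 0"
  shows "pdiff (pmul (p G1 G1) (p G3 G3)) (pmul (p G3 G3) (p G1 G1)) \<in> S5_ideal q"
proof -
  have eq: "pdiff (pmul (p G1 G1) (p G3 G3)) (pmul (p G3 G3) (p G1 G1)) = (padd (cg ((1)) [] rC [(G3, True), (G3, False)]) (padd (cg ((1)) [(G1, False), (G1, True)] (rE q) []) (padd (cg ((1) + (-1) * (complex_of_real q)^2) [(G1, False)] rC [(G1, True)]) (padd (cg ((1) + (-1) * (complex_of_real q)^2) [(G1, False)] (rB q G1 G2) [(G2, True)]) (padd (cg ((1)) [(G1, False)] (rB q G1 G3) [(G3, True)]) (padd (cg ((-1)) [] (rE q) [(G1, True), (G1, False)]) (padd (cg ((-1) + (1) * (complex_of_real q)^2) [(G1, False), (G1, True)] rC []) (padd (cg ((-1) + (1) * (complex_of_real q)^2) [(G1, False)] rC [(G1, True)]) (padd (cg ((-1) + (1) * (complex_of_real q)^2) [(G2, False)] (rAs q G1 G2) [(G1, False)]) (padd (cg ((-1) * (complex_of_real q)^1 + (1) * (complex_of_real q)^3) [(G2, False), (G1, True)] (rB q G2 G1) []) (padd (cg ((-1) * (complex_of_real q)^2 + (1) * (complex_of_real q)^4) [(G2, False)] rC [(G2, True)]) (padd (cg ((1) * (complex_of_real q)^1 + (-1) * (complex_of_real q)^3) [] (rA q G1 G2) [(G1, True), (G2, True)]) (padd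 (cg ((-1)) [] rF [(G1, True), (G1, False)]) (padd (cg ((1)) [(G1, False), (G1, True)] rC []) (padd (cg ((1)) [(G1, False)] rC [(G1, True)]) (padd (cg ((1)) [(G2, False)] (rAs q G1 G2) [(G1, False)]) (padd (cg ((1) * (complex_of_real q)^1) [(G2, False), (G1, True)] (rB q G2 G1) []) (padd (cg ((1) * (complex_of_real q)^2) [(G2, False)] rC [(G2, True)]) (padd (cg ((-1) * (complex_of_real q)^1) [] (rA q G1 G2) [(G1, True), (G2, True)]) (padd (cg ((-1)) [] rC []) (padd (cg ((1)) [(G1, False), (G1, True)] rF []) (padd (cg ((-1)) [(G1, False)] rC [(G1, True)]) (padd (cg ((-1)) [(G1, False)] (rB q G1 G2) [(G2, True)]) (padd (cg ((-1)) [(G1, False)] (rB q G1 G3) [(G3, True)]) (\<lambda>w. 0)))))))))))))))))))))))))"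
    apply (rule poly_eq_on[where W = "{[(G1, True), (G1, False)], [(G1, True), (G1, False), (G3, True), (G3, False)], [(G3, True), (G3, False), (G1, True), (G1, False)], [(G1, False), (G1, True)], [(G1, False), (G1, True), (G1, True), (G1, False)], [(G1, False), (G1, True), (G3, True), (G3, False)], [(G1, False), (G1, True), (G1, False), (G1, True)], [(G1, False), (G1, True), (G2, False), (G2, True)], [(G1, False), (G1, True), (G3, False), (G3, True)], [(G1, False), (G1, False), (G1, True), (G1, True)], [(G1, False), (G2, False), (G1, True), (G2, True)], [(G1, False), (G3, False), (G1, True), (G3, True)], [(G2, False), (G1, True), (G2, True), (G1, False)], [(G2, False), (G1, True), (G1, False), (G2, True)], [(G2, False), (G2, True), (G1, True), (G1, False)], [(G2, False), (G1, False), (G1, True), (G2, True)], [(G3, False), (G3, True), (G1, True), (G1, False)]}"])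
    apply (simp_all only: rel_defs poly_simps)
    apply (simp_all add: pdiff_def padd_def psc_def mon_def wstar_def q0 field_simps power2_eq_square power3_eq_cube pow4_sq)
    done
  show ?thesis unfolding eq
    by (intro S5_ideal.add cg_in rA_in rAs_in rB_in rC_in rD_in rE_in rF_in zero_in; simp)
qed

lemma E6: assumes q0: "q \<noteq> 0"
  shows "pdiff (pmul (p G1 G1) (p G2 G3)) (pmul (p G2 G3) (p G1 G1)) \<in> S5_ideal q"
proof -
  have eq: "pdiff (pmul (p G1 G1) (p G2 G3)) (pmul (p G2 G3) (p G1 G1)) = (padd (cg ((1)) [] rC [(G2, True), (G3, False)]) (padd (cg ((1)) [(G1, False), (G1, True)] (rB q G2 G3) []) (padd (cg ((1) * (complex_of_real q)^1) [(G1, False)] (rB q G1 G3) [(G2, True)]) (padd (cg ((-1)) [] (rB q G2 G3) [(G1, True), (G1, False)]) (padd (cg ((-1) * (complex_of_real q)^1) [(G3, False)] (rAs q G1 G2) [(G1, False)]) (padd (cg ((-1) * (complex_of_real q)^2) [(G3, False), (G1, True)] (rB q G2 G1) []) (padd (cg ((-1) * (complex_of_real q)^3) [(G3, False)] rC [(G2, True)]) (padd (cg ((1) * (complex_of_real q)^2) [] (rA q G1 G3) [(G1, True), (G2, True)]) (\<lambda>w. 0)))))))))"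
    apply (rule poly_eq_on[where W = "{[(G1, True), (G1, False), (G2, True), (G3, False)], [(G2, True), (G3, False), (G1, True), (G1, False)], [(G1, False), (G1, True), (G2, True), (G3, False)], [(G1, False), (G1, True), (G3, False), (G2, True)], [(G1, False), (G3, False), (G1, True), (G2, True)], [(G3, False), (G1, True), (G2, True), (G1, False)], [(G3, False), (G1, True), (G1, False), (G2, True)], [(G3, False), (G2, True), (G1, True), (G1, False)], [(G3, False), (G1, False), (G1, True), (G2, True)]}"])
    apply (simp_all only: rel_defs poly_simps)
    apply (simp_all add: pdiff_def padd_def psc_def mon_def wstar_def q0 field_simps power2_eq_square power3_eq_cube pow4_sq)
    done
  show ?thesis unfolding eq
    by (intro S5_ideal.add cg_in rA_in rAs_in rB_in rC_in rD_in rE_in rF_in zero_in; simp)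
qed

lemma E7: assumes q0: "q \<noteq> 0"
  shows "pdiff (pmul (p G2 G1) (p G1 G3)) (psc (of_real (q^2)) (pmul (p G1 G1) (p G2 G3))) \<in> S5_ideal q"
proof -
  have eq: "pdiff (pmul (p G2 G1) (p G1 G3)) (psc (of_real (q^2)) (pmul (p G1 G1) (p G2 G3))) = (padd (cg ((1)) [] (rB q G2 G1) [(G1, True), (G3, False)]) (padd (cg ((1) * (complex_of_real q)^1) [(G1, False)] (rAs q G1 G2) [(G3, False)]) (padd (cg ((1) * (complex_of_real q)^2) [(G1, False), (G1, True)] (rB q G2 G3) []) (padd (cg ((1) * (complex_of_real q)^3) [(G1, False)] (rB q G1 G3) [(G2, True)]) (padd (cg ((-1) * (complex_of_real q)^2) [] rC [(G2, True), (G3, False)]) (padd (cg ((-1) * (complex_of_real q)^2) [(G1, False), (G1, True)] (rB q G2 G3) []) (padd (cg ((-1) * (complex_of_real q)^3) [(G1, False)] (rB q G1 G3) [(G2, True)]) (\<lambda>w. 0))))))))"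
    apply (rule poly_eq_on[where W = "{[(G1, True), (G1, False), (G2, True), (G3, False)], [(G2, True), (G1, False), (G1, True), (G3, False)], [(G1, False), (G1, True), (G2, True), (G3, False)], [(G1, False), (G1, True), (G3, False), (G2, True)], [(G1, False), (G2, True), (G1, True), (G3, False)], [(G1, False), (G3, False), (G1, True), (G2, True)]}"])
    apply (simp_all only: rel_defs poly_simps)
    apply (simp_all add: pdiff_def padd_def psc_def mon_def wstar_def q0 field_simps power2_eq_square power3_eq_cube pow4_sq)
    done
  show ?thesis unfolding eq
    by (intro S5_ideal.add cg_in rA_in rAs_in rB_in rC_in rD_in rE_in rF_in zero_in; simp)
qed

lemma E8: assumes q0: "q \<noteq> 0"
  shows "pdiff (pmul (p G1 G1) (p G1 G2)) (psc (of_real (q^2)) (pmul (p G1 G2) (p G1 G1))) \<in> S5_ideal q"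
proof -
  have eq: "pdiff (pmul (p G1 G1) (p G1 G2)) (psc (of_real (q^2)) (pmul (p G1 G2) (p G1 G1))) = (padd (cg ((1)) [] rC [(G1, True), (G2, False)]) (padd (cg ((1)) [(G1, False), (G1, True)] (rB q G1 G2) []) (padd (cg ((1) * (complex_of_real q)^1) [(G1, False)] (rB q G1 G2) [(G1, True)]) (padd (cg ((-1) * (complex_of_real q)^2) [] (rB q G1 G2) [(G1, True), (G1, False)]) (padd (cg ((-1) * (complex_of_real q)^3) [(G2, False), (G1, True)] rC []) (padd (cg ((-1) * (complex_of_real q)^3) [(G2, False)] rC [(G1, True)]) (padd (cg ((1) * (complex_of_real q)^2) [] (rA q G1 G2) [(G1, True), (G1, True)]) (\<lambda>w. 0))))))))"
    apply (rule poly_eq_on[where W = "{[(G1, True), (G1, False), (G1, True), (G2, False)], [(G1, True), (G2, False), (G1, True), (G1, False)], [(G1, False), (G1, True), (G1, True), (G2, False)], [(G1, False), (G1, True), (G2, False), (G1, True)], [(G1, False), (G2, False), (G1, True), (G1, True)], [(G2, False), (G1, True), (G1, True), (G1, False)], [(G2, False), (G1, True), (G1, False), (G1, True)], [(G2, False), (G1, False), (G1, True), (G1, True)]}"])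
    apply (simp_all only: rel_defs poly_simps)
    apply (simp_all add: pdiff_def padd_def psc_def mon_def wstar_def q0 field_simps power2_eq_square power3_eq_cube pow4_sq)
    done
  show ?thesis unfolding eq
    by (intro S5_ideal.add cg_in rA_in rAs_in rB_in rC_in rD_in rE_in rF_in zero_in; simp)
qed

lemma E9: assumes q0: "q \<noteq> 0"
  shows "pdiff (pmul (p G1 G1) (p G1 G3)) (psc (of_real (q^2)) (pmul (p G1 G3) (p G1 G1))) \<in> S5_ideal q"
proof -
  have eq: "pdiff (pmul (p G1 G1) (p G1 G3)) (psc (of_real (q^2)) (pmul (p G1 G3) (p G1 G1))) = (padd (cg ((1)) [] rC [(G1, True), (G3, False)]) (padd (cg ((1)) [(G1, False), (G1, True)] (rB q G1 G3) []) (padd (cg ((1) * (complex_of_real q)^1) [(G1, False)] (rB q G1 G3) [(G1, True)]) (padd (cg ((-1) * (complex_of_real q)^2) [] (rB q G1 G3) [(G1, True), (G1, False)]) (padd (cg ((-1) * (complex_of_real q)^3) [(G3, False), (G1, True)] rC []) (padd (cg ((-1) * (complex_of_real q)^3) [(G3, False)] rC [(G1, True)]) (padd (cg ((1) * (complex_of_real q)^2) [] (rA q G1 G3) [(G1, True), (G1, True)]) (\<lambda>w. 0))))))))"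
    apply (rule poly_eq_on[where W = "{[(G1, True), (G1, False), (G1, True), (G3, False)], [(G1, True), (G3, False), (G1, True), (G1, False)], [(G1, False), (G1, True), (G1, True), (G3, False)], [(G1, False), (G1, True), (G3, False), (G1, True)], [(G1, False), (G3, False), (G1, True), (G1, True)], [(G3, False), (G1, True), (G1, True), (G1, False)], [(G3, False), (G1, True), (G1, False), (G1, True)], [(G3, False), (G1, False), (G1, True), (G1, True)]}"])
    apply (simp_all only: rel_defs poly_simps)
    apply (simp_all add: pdiff_def padd_def psc_def mon_def wstar_def q0 field_simps power2_eq_square power3_eq_cube pow4_sq)
    done
  show ?thesis unfolding eq
    by (intro S5_ideal.add cg_in rA_in rAs_in rB_in rC_in rD_in rE_in rF_in zero_in; simp)
qed

lemma E10: assumes q0: "q \<noteq> 0"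
  shows "pdiff (pmul (p G1 G3) (p G1 G2)) (psc (of_real (inverse q)) (pmul (p G1 G2) (p G1 G3))) \<in> S5_ideal q"
proof -
  have eq: "pdiff (pmul (p G1 G3) (p G1 G2)) (psc (of_real (inverse q)) (pmul (p G1 G2) (p G1 G3))) = (padd (cg ((1)) [] (rB q G1 G3) [(G1, True), (G2, False)]) (padd (cg ((1) * (complex_of_real q)^1) [(G3, False), (G1, True)] (rB q G1 G2) []) (padd (cg ((1) * (complex_of_real q)^2) [(G3, False)] (rB q G1 G2) [(G1, True)]) (padd (cg ((-1) * (complex_of_real q)^2) [] (rA q G2 G3) [(G1, True), (G1, True)]) (padd (cg ((-1) * inverse (complex_of_real q)^1) [] (rB q G1 G2) [(G1, True), (G3, False)]) (padd (cg ((-1)) [(G2, False), (G1, True)] (rB q G1 G3) []) (padd (cg ((-1) * (complex_of_real q)^1) [(G2, False)] (rB q G1 G3) [(G1, True)]) (\<lambda>w. 0))))))))"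
    apply (rule poly_eq_on[where W = "{[(G1, True), (G2, False), (G1, True), (G3, False)], [(G1, True), (G3, False), (G1, True), (G2, False)], [(G2, False), (G1, True), (G1, True), (G3, False)], [(G2, False), (G1, True), (G3, False), (G1, True)], [(G2, False), (G3, False), (G1, True), (G1, True)], [(G3, False), (G1, True), (G1, True), (G2, False)], [(G3, False), (G1, True), (G2, False), (G1, True)], [(G3, False), (G2, False), (G1, True), (G1, True)]}"])
    apply (simp_all only: rel_defs poly_simps)
    apply (simp_all add: pdiff_def padd_def psc_def mon_def wstar_def q0 field_simps power2_eq_square power3_eq_cube pow4_sq)
    done
  show ?thesis unfolding eq
    by (intro S5_ideal.add cg_in rA_in rAs_in rB_in rC_in rD_in rE_in rF_in zero_in; simp)
qed

lemma E11: assumes q0: "q \<noteq> 0"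
  shows "pdiff (pmul (p G1 G3) (p G2 G1)) (psc (of_real (inverse q)) (pmul (p G1 G1) (p G2 G3))) \<in> S5_ideal q"
proof -
  have eq: "pdiff (pmul (p G1 G3) (p G2 G1)) (psc (of_real (inverse q)) (pmul (p G1 G1) (p G2 G3))) = (padd (cg ((1)) [] (rB q G1 G3) [(G2, True), (G1, False)]) (padd (cg ((1) * (complex_of_real q)^1) [(G3, False), (G1, True)] (rB q G2 G1) []) (padd (cg ((1) * (complex_of_real q)^2) [(G3, False)] rC [(G2, True)]) (padd (cg ((-1) * (complex_of_real q)^1) [] (rA q G1 G3) [(G1, True), (G2, True)]) (padd (cg ((-1) * inverse (complex_of_real q)^1) [] rC [(G2, True), (G3, False)]) (padd (cg ((-1) * inverse (complex_of_real q)^1) [(G1, False), (G1, True)] (rB q G2 G3) []) (padd (cg ((-1)) [(G1, False)] (rB q G1 G3) [(G2, True)]) (\<lambda>w. 0))))))))"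
    apply (rule poly_eq_on[where W = "{[(G1, True), (G1, False), (G2, True), (G3, False)], [(G1, True), (G3, False), (G2, True), (G1, False)], [(G1, False), (G1, True), (G2, True), (G3, False)], [(G1, False), (G1, True), (G3, False), (G2, True)], [(G1, False), (G3, False), (G1, True), (G2, True)], [(G3, False), (G1, True), (G2, True), (G1, False)], [(G3, False), (G1, True), (G1, False), (G2, True)], [(G3, False), (G1, False), (G1, True), (G2, True)]}"])
    apply (simp_all only: rel_defs poly_simps)
    apply (simp_all add: pdiff_def padd_def psc_def mon_def wstar_def q0 field_simps power2_eq_square power3_eq_cube pow4_sq)
    done
  show ?thesis unfolding eq
    by (intro S5_ideal.add cg_in rA_in rAs_in rB_in rC_in rD_in rE_in rF_in zero_in; simp)
qed

lemma E12: assumes q0: "q \<noteq> 0"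
  shows "pdiff (pmul (p G1 G2) (p G2 G1)) (pdiff (pmul (p G1 G1) (p G2 G2)) (psc (of_real (1 - q^2)) (pmul (p G1 G1) (p G1 G1)))) \<in> S5_ideal q"
proof -
  have eq: "pdiff (pmul (p G1 G2) (p G2 G1)) (pdiff (pmul (p G1 G1) (p G2 G2)) (psc (of_real (1 - q^2)) (pmul (p G1 G1) (p G1 G1)))) = (padd (cg ((1)) [] (rB q G1 G2) [(G2, True), (G1, False)]) (padd (cg ((1) * (complex_of_real q)^1) [(G2, False), (G1, True)] (rB q G2 G1) []) (padd (cg ((1) * (complex_of_real q)^2) [(G2, False)] rC [(G2, True)]) (padd (cg ((-1) * (complex_of_real q)^1) [] (rA q G1 G2) [(G1, True), (G2, True)]) (padd (cg ((1) + (-1) * (complex_of_real q)^2) [] rC [(G1, True), (G1, False)]) (padd (cg ((-1)) [] rC [(G2, True), (G2, False)]) (padd (cg ((1) + (-1) * (complex_of_real q)^2) [(G1, False), (G1, True)] rC []) (padd (cg ((-1)) [(G1, False), (G1, True)] (rD q) []) (padd (cg ((-1)) [(G1, False)] (rB q G1 G2) [(G2, True)]) (\<lambda>w. 0))))))))))"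
    apply (rule poly_eq_on[where W = "{[(G1, True), (G1, False), (G1, True), (G1, False)], [(G1, True), (G1, False), (G2, True), (G2, False)], [(G1, True), (G2, False), (G2, True), (G1, False)], [(G1, False), (G1, True), (G1, True), (G1, False)], [(G1, False), (G1, True), (G2, True), (G2, False)], [(G1, False), (G1, True), (G1, False), (G1, True)], [(G1, False), (G1, True), (G2, False), (G2, True)], [(G1, False), (G2, False), (G1, True), (G2, True)], [(G2, False), (G1, True), (G2, True), (G1, False)], [(G2, False), (G1, True), (G1, False), (G2, True)], [(G2, False), (G1, False), (G1, True), (G2, True)]}"])
    apply (simp_all only: rel_defs poly_simps)
    apply (simp_all add: pdiff_def padd_def psc_def mon_def wstar_def q0 field_simps power2_eq_square power3_eq_cube pow4_sq)
    done
  show ?thesis unfolding eq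
    by (intro S5_ideal.add cg_in rA_in rAs_in rB_in rC_in rD_in rE_in rF_in zero_in; simp)
qed

lemma E13: assumes q0: "q \<noteq> 0"
  shows "pdiff (pmul (p G1 G3) (p G3 G1)) (pdiff (pmul (p G1 G1) (p G3 G3)) (psc (of_real (1 - q^2)) (pdiff (padd (pmul (p G1 G1) (p G1 G1)) (pmul (p G1 G1) (p G2 G2))) (psc (of_real (1 - q^2)) (pmul (p G1 G1) (p G1 G1)))))) \<in> S5_ideal q"
proof -
  have eq: "pdiff (pmul (p G1 G3) (p G3 G1)) (pdiff (pmul (p G1 G1) (p G3 G3)) (psc (of_real (1 - q^2)) (pdiff (padd (pmul (p G1 G1) (p G1 G1)) (pmul (p G1 G1) (p G2 G2))) (psc (of_real (1 - q^2)) (pmul (p G1 G1) (p G1 G1)))))) = (padd (cg ((1)) [] (rB q G1 G3) [(G3, True), (G1, False)]) (padd (cg ((1) * (complex_of_real q)^1) [(G3, False), (G1, True)] (rB q G3 G1) []) (padd (cg ((1) * (complex_of_real q)^2) [(G3, False)] rC [(G3, True)]) (padd (cg ((-1) * (complex_of_real q)^1) [] (rA q G1 G3) [(G1, True), (G3, True)]) (padd (cg ((1) * (complex_of_real q)^2 + (-1) * (complex_of_real q)^4) [] rC [(G1, True), (G1, False)]) (padd (cg ((1) + (-1) * (complex_of_real q)^2) [] rC [(G2, True), (G2, False)]) (padd (cg ((-1)) [] rC [(G3, True), (G3, False)]) (padd (cg ((1) * (complex_of_real q)^2 + (-1) * (complex_of_real q)^4) [(G1, False), (G1, True)] rC [])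 (padd (cg ((1) + (-1) * (complex_of_real q)^2) [(G1, False), (G1, True)] (rD q) []) (padd (cg ((-1)) [(G1, False), (G1, True)] (rE q) []) (padd (cg ((-1)) [(G1, False)] (rB q G1 G3) [(G3, True)]) (\<lambda>w. 0))))))))))))"
    apply (rule poly_eq_on[where W = "{[(G1, True), (G1, False), (G1, True), (G1, False)], [(G1, True), (G1, False), (G2, True), (G2, False)], [(G1, True), (G1, False), (G3, True), (G3, False)], [(G1, True), (G3, False), (G3, True), (G1, False)], [(G1, False), (G1, True), (G1, True), (G1, False)], [(G1, False), (G1, True), (G2, True), (G2, False)], [(G1, False), (G1, True), (G3, True), (G3, False)], [(G1, False), (G1, True), (G1, False), (G1, True)], [(G1, False), (G1, True), (G2, False), (G2, True)], [(G1, False), (G1, True), (G3, False), (G3, True)], [(G1, False), (G3, False), (G1, True), (G3, True)], [(G3, False), (G1, True), (G3, True), (G1, False)], [(G3, False), (G1, True), (G1, False), (G3, True)], [(G3, False), (G1, False), (G1, True), (G3, True)]}"])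
    apply (simp_all only: rel_defs poly_simps)
    apply (simp_all add: pdiff_def padd_def psc_def mon_def wstar_def q0 field_simps power2_eq_square power3_eq_cube pow4_sq)
    done
  show ?thesis unfolding eq
    by (intro S5_ideal.add cg_in rA_in rAs_in rB_in rC_in rD_in rE_in rF_in zero_in; simp)
qed

lemma E14: assumes q0: "q \<noteq> 0"
  shows "pdiff pone (padd (padd (psc (of_real (q^4)) (p G1 G1)) (psc (of_real (q^2)) (p G2 G2))) (p G3 G3)) \<in> S5_ideal q"
proof -
  have eq: "pdiff pone (padd (padd (psc (of_real (q^4)) (p G1 G1)) (psc (of_real (q^2)) (p G2 G2))) (p G3 G3)) = (padd (cg ((-1) * (complex_of_real q)^4) [] rC []) (padd (cg ((-1) * (complex_of_real q)^2) [] (rD q) []) (padd (cg ((-1)) [] (rE q) []) (padd (cg ((-1)) [] rF []) (\<lambda>w. 0)))))"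
    apply (rule poly_eq_on[where W = "{[], [(G1, True), (G1, False)], [(G2, True), (G2, False)], [(G3, True), (G3, False)], [(G1, False), (G1, True)], [(G2, False), (G2, True)], [(G3, False), (G3, True)]}"])
    apply (simp_all only: rel_defs poly_simps)
    apply (simp_all add: pdiff_def padd_def psc_def mon_def wstar_def q0 field_simps power2_eq_square power3_eq_cube pow4_sq)
    done
  show ?thesis unfolding eq
    by (intro S5_ideal.add cg_in rA_in rAs_in rB_in rC_in rD_in rE_in rF_in zero_in; simp)
qed



definition csm :: "('h::real_inner \<Rightarrow> 'h) \<Rightarrow> complex \<Rightarrow> 'h \<Rightarrow> 'h" where
  "csm J c v = Re c *\<^sub>R v + Im c *\<^sub>R J v"

lemma cscale_csm: "cscale J c T x = csm J c (T x)" by (simp add: cscale_def csm_def)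

lemma csm_add_c: "csm J (a + b) v = csm J a v + csm J b v" by (simp add: csm_def algebra_simps)
lemma csm_sum_c: "csm J (\<Sum>i\<in>S. c i) v = (\<Sum>i\<in>S. csm J (c i) v)"
  by (simp add: csm_def scaleR_sum_left sum.distrib)
lemma csm_0_c[simp]: "csm J 0 v = 0" by (simp add: csm_def)
lemma csm_1[simp]: "csm J 1 v = v" by (simp add: csm_def)
lemma csm_of_real: "csm J (of_real r) v = r *\<^sub>R v" by (simp add: csm_def)
lemma csm_add_v: "cstruct J \<Longrightarrow> csm J c (v + w) = csm J c v + csm J c w"
  by (simp add: csm_def cs_add algebra_simps)
lemma csm_diff_v: "cstruct J \<Longrightarrow> csm J c (v - w) = csm J c v - csm J c w"
  by (simp add: csm_def cs_diff algebra_simps)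
lemma csm_0_v[simp]: "cstruct J \<Longrightarrow> csm J c 0 = 0" by (simp add: csm_def cs_zero)
lemma csm_sum_v: "cstruct J \<Longrightarrow> csm J c (\<Sum>i\<in>S. v i) = (\<Sum>i\<in>S. csm J c (v i))"
  by (simp add: csm_def linear_sum[OF cs_linear] scaleR_sum_right sum.distrib)
lemma csm_mult: "cstruct J \<Longrightarrow> csm J (c * d) v = csm J c (csm J d v)"
  by (simp add: csm_def cs_add cs_scale algebra_simps)
lemma csm_comm: "cstruct J \<Longrightarrow> cbounded J S \<Longrightarrow> S (csm J c v) = csm J c (S v)"
  unfolding csm_def cbounded_def
  by (simp add: linear_add[OF bounded_linear.linear] linear_scale[OF bounded_linear.linear])
lemma inner_csm: "cstruct J \<Longrightarrow> inner (csm J (cnj c) v) w = inner v (csm J c w)"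
  by (simp add: csm_def inner_add inner_diff_left cs_skew)

lemma cbounded_sum:
  assumes J: "cstruct J" and "finite S" "\<And>i. i \<in> S \<Longrightarrow> cbounded J (T i)"
  shows "cbounded J (\<lambda>x. \<Sum>i\<in>S. T i x)"
  using assms(2,3)
proof (induction S rule: finite_induct)
  case empty thus ?case by (simp add: cbounded_zero[OF J])
next
  case (insert a F) thus ?case by (simp add: cbounded_add[OF J])
qed

section \<open>Words as operators\<close>

definition lop :: "(gen \<Rightarrow> 'h \<Rightarrow> 'h) \<Rightarrow> (gen \<Rightarrow> 'h \<Rightarrow> 'h) \<Rightarrow> letter \<Rightarrow> 'h \<Rightarrow> 'h" where
  "lop Z Zs l = (if snd l then Zs (fst l) else Z (fst l))"

primrec ev :: "(gen \<Rightarrow> 'h \<Rightarrow> 'h) \<Rightarrow> (gen \<Rightarrow> 'h \<Rightarrow> 'h) \<Rightarrow> letter list \<Rightarrow> 'h \<Rightarrow> 'h" where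
  "ev Z Zs [] = (\<lambda>x. x)"
| "ev Z Zs (l # w) = (\<lambda>x. lop Z Zs l (ev Z Zs w x))"

lemma ev_append: "ev Z Zs (u @ v) x = ev Z Zs u (ev Z Zs v x)"
  by (induction u arbitrary: x) auto

definition PT :: "('h::real_inner \<Rightarrow> 'h) \<Rightarrow> (gen \<Rightarrow> 'h \<Rightarrow> 'h) \<Rightarrow> (gen \<Rightarrow> 'h \<Rightarrow> 'h) \<Rightarrow> poly \<Rightarrow> 'h \<Rightarrow> 'h" where
  "PT J Z Zs f = (\<lambda>x. \<Sum>w\<in>{w. f w \<noteq> 0}. csm J (f w) (ev Z Zs w x))"

locale zfam =
  fixes J :: "'h::{real_inner,complete_space} \<Rightarrow> 'h" and Z Zs :: "gen \<Rightarrow> 'h \<Rightarrow> 'h"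
  assumes J: "cstruct J" and cbZ: "\<And>i. cbounded J (Z i)" and adjZ: "\<And>i. isadj (Zs i) (Z i)"
begin

lemma cbZs: "cbounded J (Zs i)"
proof -
  have "adj (Z i) = Zs i" by (rule adj_eq[OF cbounded_bl[OF cbZ] adjZ])
  thus ?thesis using cbounded_adj[OF J cbZ[of i]] by simp
qed

lemma lop_cb: "cbounded J (lop Z Zs l)" by (simp add: lop_def cbZ cbZs)

lemma ev_cb: "cbounded J (ev Z Zs w)"
proof (induction w)
  case Nil thus ?case by (simp add: cbounded_id)
next
  case (Cons l w) thus ?case by (simp add: cbounded_comp'[OF lop_cb])
qed

lemma lop_adj: "isadj (lop Z Zs (fst l, \<not> snd l)) (lop Z Zs l)"
  by (cases l) (auto simp: lop_def adjZ isadj_sym)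

lemma ev_adj: "isadj (ev Z Zs (wstar w)) (ev Z Zs w)"
proof (induction w)
  case Nil thus ?case by (simp add: wstar_def isadj_def)
next
  case (Cons l w)
  have ws: "wstar (l # w) = wstar w @ [(fst l, \<not> snd l)]" by (cases l) (simp add: wstar_def)
  have "isadj (ev Z Zs (wstar w) \<circ> lop Z Zs (fst l, \<not> snd l)) (lop Z Zs l \<circ> ev Z Zs w)"
    by (rule isadj_comp[OF lop_adj Cons])
  thus ?case by (simp add: ws ev_append o_def)
qed

abbreviation "PTf \<equiv> PT J Z Zs"

lemma PT_sub:
  assumes "finite S" "{w. f w \<noteq> 0} \<subseteq> S"
  shows "PTf f x = (\<Sum>w\<in>S. csm J (f w) (ev Z Zs w x))"
  unfolding PT_def by (rule sum.mono_neutral_left[OF assms]) auto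

lemma PT_cb: assumes "fsupp f" shows "cbounded J (PTf f)"
  unfolding PT_def
  using assms unfolding fsupp_def
  by (intro cbounded_sum[OF J]) (auto simp: cscale_csm[symmetric] intro!: cbounded_cscale[OF J ev_cb])

lemma PT_mon: "PTf (mon w) = ev Z Zs w"
proof
  fix x
  have "{v. mon w v \<noteq> 0} = {w}" by (auto simp: mon_def)
  thus "PTf (mon w) x = ev Z Zs w x" unfolding PT_def by (simp add: mon_def)
qed

lemma PT_padd: assumes "fsupp f" "fsupp g" shows "PTf (padd f g) x = PTf f x + PTf g x"
proof -
  let ?S = "{w. f w \<noteq> 0} \<union> {w. g w \<noteq> 0}"
  have fin: "finite ?S" using assms by (simp add: fsupp_def)
  have "PTf (padd f g) x = (\<Sum>w\<in>?S. csm J (padd f g w) (ev Z Zs w x))"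
    by (rule PT_sub[OF fin]) (auto simp: padd_def)
  also have "\<dots> = (\<Sum>w\<in>?S. csm J (f w) (ev Z Zs w x)) + (\<Sum>w\<in>?S. csm J (g w) (ev Z Zs w x))"
    by (simp add: padd_def csm_add_c sum.distrib)
  also have "\<dots> = PTf f x + PTf g x"
    by (simp add: PT_sub[OF fin])
  finally show ?thesis .
qed

lemma PT_psc: assumes "fsupp f" shows "PTf (psc c f) x = csm J c (PTf f x)"
proof -
  let ?S = "{w. f w \<noteq> 0}"
  have fin: "finite ?S" using assms by (simp add: fsupp_def)
  have "PTf (psc c f) x = (\<Sum>w\<in>?S. csm J (psc c f w) (ev Z Zs w x))"
    by (rule PT_sub[OF fin]) (auto simp: psc_def)
  also have "\<dots> = csm J c (PTf f x)"
    by (simp add: PT_def psc_def csm_mult[OF J] csm_sum_v[OF J])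
  finally show ?thesis .
qed

lemma PT_pdiff: assumes "fsupp f" "fsupp g" shows "PTf (pdiff f g) x = PTf f x - PTf g x"
proof -
  let ?S = "{w. f w \<noteq> 0} \<union> {w. g w \<noteq> 0}"
  have fin: "finite ?S" using assms by (simp add: fsupp_def)
  have "PTf (pdiff f g) x = (\<Sum>w\<in>?S. csm J (pdiff f g w) (ev Z Zs w x))"
    by (rule PT_sub[OF fin]) (auto simp: pdiff_def)
  also have "\<dots> = (\<Sum>w\<in>?S. csm J (f w) (ev Z Zs w x)) - (\<Sum>w\<in>?S. csm J (g w) (ev Z Zs w x))"
    by (simp add: pdiff_def csm_def sum_subtractf algebra_simps)
  also have "\<dots> = PTf f x - PTf g x"
    by (simp add: PT_sub[OF fin])
  finally show ?thesis .
qed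

lemma pmul_as_sum:
  assumes "fsupp f" "fsupp g"
  shows "pmul f g w = (\<Sum>p\<in>{p \<in> {u. f u \<noteq> 0} \<times> {v. g v \<noteq> 0}. fst p @ snd p = w}. f (fst p) * g (snd p))"
proof -
  let ?F = "{u. f u \<noteq> 0}" and ?G = "{v. g v \<noteq> 0}"
  let ?K = "{k. k \<le> length w \<and> take k w \<in> ?F \<and> drop k w \<in> ?G}"
  have "pmul f g w = (\<Sum>k\<in>?K. f (take k w) * g (drop k w))"
    unfolding pmul_def by (rule sum.mono_neutral_right) auto
  also have "\<dots> = (\<Sum>p\<in>{p \<in> ?F \<times> ?G. fst p @ snd p = w}. f (fst p) * g (snd p))"
    by (rule sum.reindex_bij_witness[where i = "\<lambda>p. length (fst p)" and j = "\<lambda>k. (take k w, drop k w)"])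
       (auto simp: min_def)
  finally show ?thesis .
qed

lemma PT_pmul: assumes f: "fsupp f" and g: "fsupp g" shows "PTf (pmul f g) x = PTf f (PTf g x)"
proof -
  let ?F = "{u. f u \<noteq> 0}" and ?G = "{v. g v \<noteq> 0}"
  let ?app = "\<lambda>p. fst p @ snd p"
  let ?S = "?app ` (?F \<times> ?G)"
  have fF: "finite ?F" and fG: "finite ?G" using f g by (simp_all add: fsupp_def)
  have finS: "finite ?S" using fF fG by simp
  have sub: "{w. pmul f g w \<noteq> 0} \<subseteq> ?S"
  proof
    fix w assume "w \<in> {w. pmul f g w \<noteq> 0}"
    hence "(\<Sum>p\<in>{p \<in> ?F \<times> ?G. fst p @ snd p = w}. f (fst p) * g (snd p)) \<noteq> 0"
      by (simp add: pmul_as_sum[OF f g])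
    then obtain p where p: "p \<in> {p \<in> ?F \<times> ?G. fst p @ snd p = w}"
      using sum.not_neutral_contains_not_neutral by blast
    hence "w = ?app p" by simp
    moreover have "p \<in> ?F \<times> ?G" using p by simp
    ultimately show "w \<in> ?S" by (rule image_eqI)
  qed
  have "PTf (pmul f g) x = (\<Sum>w\<in>?S. csm J (pmul f g w) (ev Z Zs w x))"
    by (rule PT_sub[OF finS sub])
  also have "\<dots> = (\<Sum>w\<in>?S. \<Sum>p\<in>{p \<in> ?F \<times> ?G. ?app p = w}. csm J (f (fst p) * g (snd p)) (ev Z Zs (?app p) x))"
    by (rule sum.cong[OF refl]) (auto simp: pmul_as_sum[OF f g] csm_sum_c intro!: sum.cong)
  also have "\<dots> = (\<Sum>p\<in>?F \<times> ?G. csm J (f (fst p) * g (snd p)) (ev Z Zs (?app p) x))"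
    by (rule sum.group) (use fF fG in auto)
  also have "\<dots> = (\<Sum>u\<in>?F. \<Sum>v\<in>?G. csm J (f u * g v) (ev Z Zs (u @ v) x))"
    by (simp add: sum.cartesian_product case_prod_unfold)
  also have "\<dots> = PTf f (PTf g x)"
    unfolding PT_def
    by (simp add: csm_sum_v[OF J] linear_sum[OF bounded_linear.linear[OF cbounded_bl[OF ev_cb]]]
        csm_comm[OF J ev_cb] csm_mult[OF J] ev_append)
  finally show ?thesis .
qed

lemma PT_pstar: assumes f: "fsupp f" shows "isadj (PTf (pstar f)) (PTf f)"
  unfolding isadj_def
proof (intro allI)
  fix x y
  let ?F = "{u. f u \<noteq> 0}"
  have supp: "{w. pstar f w \<noteq> 0} = wstar ` ?F"
    unfolding pstar_def by (auto simp: image_iff) (metis wstar_wstar)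
  have inj: "inj_on wstar ?F" by (rule inj_onI) (metis wstar_wstar)
  have "inner (PTf (pstar f) x) y = (\<Sum>w\<in>wstar ` ?F. inner (csm J (pstar f w) (ev Z Zs w x)) y)"
    unfolding PT_def supp by (simp add: inner_sum_left)
  also have "\<dots> = (\<Sum>v\<in>?F. inner (csm J (cnj (f v)) (ev Z Zs (wstar v) x)) y)"
    by (simp add: sum.reindex[OF inj] pstar_def)
  also have "\<dots> = (\<Sum>v\<in>?F. inner x (csm J (f v) (ev Z Zs v y)))"
  proof (rule sum.cong[OF refl])
    fix v
    have "inner (csm J (cnj (f v)) (ev Z Zs (wstar v) x)) y = inner (ev Z Zs (wstar v) x) (csm J (f v) y)"
      by (rule inner_csm[OF J])
    also have "\<dots> = inner x (ev Z Zs v (csm J (f v) y))" using ev_adj[of v] by (simp add: isadj_def)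
    also have "\<dots> = inner x (csm J (f v) (ev Z Zs v y))" by (simp add: csm_comm[OF J ev_cb])
    finally show "inner (csm J (cnj (f v)) (ev Z Zs (wstar v) x)) y = inner x (csm J (f v) (ev Z Zs v y))" .
  qed
  also have "\<dots> = inner x (PTf f y)" unfolding PT_def by (simp add: inner_sum_right)
  finally show "inner (PTf (pstar f) x) y = inner x (PTf f y)" .
qed

lemma PT_z: "PTf (z i) = Z i" "PTf (zs i) = Zs i" "PTf pone = (\<lambda>x. x)"
  by (auto simp: z_def zs_def pone_def PT_mon lop_def)

lemma PT_linear_zero: assumes "fsupp f" shows "PTf f 0 = 0"
  using PT_cb[OF assms] cbounded_bl linear_0 bounded_linear.linear by metis

end



context zfam begin

lemma PT_pmul_fun: "fsupp f \<Longrightarrow> fsupp g \<Longrightarrow> PTf (pmul f g) = PTf f \<circ> PTf g"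
  by (rule ext) (simp add: PT_pmul)

lemma PT_ideal:
  assumes H1: "\<And>i j x. gnum i < gnum j \<Longrightarrow> Z i (Z j x) = q *\<^sub>R Z j (Z i x)"
    and H2: "\<And>i j x. i \<noteq> j \<Longrightarrow> Zs i (Z j x) = q *\<^sub>R Z j (Zs i x)"
    and H3: "\<And>x. Zs G1 (Z G1 x) = Z G1 (Zs G1 x)"
    and H4: "\<And>x. Zs G2 (Z G2 x) - Z G2 (Zs G2 x) = (1 - q\<^sup>2) *\<^sub>R Z G1 (Zs G1 x)"
    and H5: "\<And>x. Zs G3 (Z G3 x) - Z G3 (Zs G3 x) = (1 - q\<^sup>2) *\<^sub>R (Z G1 (Zs G1 x) + Z G2 (Zs G2 x))"
    and H6: "\<And>x. Z G1 (Zs G1 x) + Z G2 (Zs G2 x) + Z G3 (Zs G3 x) = x"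
    and f: "f \<in> S5_ideal q"
  shows "PTf f x = 0"
  using f
proof (induction arbitrary: x rule: S5_ideal.induct)
  case (rel r)
  have fz: "fsupp (z i)" "fsupp (zs i)" "fsupp pone" for i by (simp_all add: fsupp_z)
  have fm: "fsupp (pmul a b)" if "fsupp a" "fsupp b" for a b using that by (rule fsupp_pmul)
  note ff = fz fm[OF fz(1) fz(1)] fm[OF fz(2) fz(1)] fm[OF fz(1) fz(2)] fm[OF fz(2) fz(2)]
  note pts = PT_pdiff PT_psc PT_padd PT_pmul PT_z csm_of_real
  from rel show ?case unfolding S5_rels_def comm_def
  proof (elim UnE CollectE exE conjE insertE)
    fix i j assume "r = pdiff (pmul (z i) (z j)) (psc (complex_of_real q) (pmul (z j) (z i)))" "gnum i < gnum j"
    thus "PTf r x = 0" by (simp add: pts ff fsupp_psc H1)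
  next
    fix i j assume "r = pdiff (pmul (zs i) (z j)) (psc (complex_of_real q) (pmul (z j) (zs i)))" "i \<noteq> j"
    thus "PTf r x = 0" by (simp add: pts ff fsupp_psc H2)
  next
    assume "r = pdiff (pmul (zs G1) (z G1)) (pmul (z G1) (zs G1))"
    thus "PTf r x = 0" by (simp add: pts ff H3)
  next
    assume "r = pdiff (pdiff (pmul (zs G2) (z G2)) (pmul (z G2) (zs G2))) (psc (complex_of_real (1 - q\<^sup>2)) (pmul (z G1) (zs G1)))"
    thus "PTf r x = 0" by (simp add: pts ff fsupp_psc fsupp_pdiff H4 del: of_real_diff of_real_power)
  next
    assume "r = pdiff (pdiff (pmul (zs G3) (z G3)) (pmul (z G3) (zs G3)))
        (psc (complex_of_real (1 - q\<^sup>2)) (padd (pmul (z G1) (zs G1)) (pmul (z G2) (zs G2))))"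
    thus "PTf r x = 0" by (simp add: pts ff fsupp_psc fsupp_pdiff fsupp_padd H5 del: of_real_diff of_real_power)
  next
    assume "r = pdiff (padd (padd (pmul (z G1) (zs G1)) (pmul (z G2) (zs G2))) (pmul (z G3) (zs G3))) pone"
    thus "PTf r x = 0" by (simp add: pts ff fsupp_padd H6)
  qed simp
next
  case (add f g) thus ?case by (simp add: PT_padd S5_ideal_fsupp)
next
  case (sc f c) thus ?case by (simp add: PT_psc S5_ideal_fsupp J)
next
  case (lmul f g) thus ?case by (simp add: PT_pmul S5_ideal_fsupp PT_linear_zero)
next
  case (rmul f g) thus ?case by (simp add: PT_pmul S5_ideal_fsupp)
next
  case (star f)
  have "isadj (PTf (pstar f)) (PTf f)" by (rule PT_pstar[OF S5_ideal_fsupp[OF star(1)]])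
  hence "inner (PTf (pstar f) x) y = 0" for y using star(2) by (simp add: isadj_def)
  from this[of "PTf (pstar f) x"] show ?case by simp
qed

end



lemma vec_eq_inner: "(\<And>y. inner u y = inner v y) \<Longrightarrow> u = v"
proof -
  assume "\<And>y. inner u y = inner v y"
  hence "inner (u - v) (u - v) = 0" by (simp add: inner_diff_left)
  thus "u = v" by simp
qed

lemma pos_zero:
  fixes S :: "'h::real_inner \<Rightarrow> 'h"
  assumes bl: "bounded_linear S" and sa: "isadj S S" and pos: "\<And>x. inner x (S x) \<ge> 0" and y: "inner y (S y) = 0"
  shows "S y = 0"
proof -
  have lin: "linear S" using bl by (rule bounded_linear.linear)
  have "inner (S y) (S y) = 0"
  proof -
    let ?u = "S y"
    have "- inner ?u (S y) = 0"
    proof (rule quad_zero[where b = "inner ?u (S ?u)"])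
      show "0 \<le> inner ?u (S ?u)" by (rule pos)
      fix t
      have "0 \<le> inner (y + t *\<^sub>R ?u) (S (y + t *\<^sub>R ?u))" by (rule pos)
      also have "\<dots> = inner y (S y) + t * inner y (S ?u) + t * inner ?u (S y) + t^2 * inner ?u (S ?u)"
        by (simp add: linear_add[OF lin] linear_scale[OF lin] inner_add inner_scaleR_left inner_scaleR_right
            power2_eq_square algebra_simps)
      also have "inner y (S ?u) = inner ?u (S y)" using sa unfolding isadj_def by (metis inner_commute)
      finally show "0 \<le> - 2 * t * - inner ?u (S y) + t^2 * inner ?u (S ?u)" using y by simp
    qed
    thus ?thesis by simp
  qed
  thus ?thesis by simp
qed

lemma sqrt_unique:
  fixes S R :: "'h::real_inner \<Rightarrow> 'h"
  assumes blS: "bounded_linear S" and blR: "bounded_linear R"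
    and saS: "isadj S S" and saR: "isadj R R"
    and posS: "\<And>x. inner x (S x) \<ge> 0" and posR: "\<And>x. inner x (R x) \<ge> 0"
    and comm: "\<And>x. S (R x) = R (S x)" and sq: "\<And>x. S (S x) = R (R x)"
  shows "S = R"
proof
  fix x0
  have lS: "linear S" and lR: "linear R" using blS blR by (simp_all add: bounded_linear.linear)
  define D where "D x = S x - R x" for x
  have SRD: "S (D x) + R (D x) = 0" for x
    unfolding D_def by (simp add: linear_diff[OF lS] linear_diff[OF lR] comm sq)
  have zero: "S (D x) = 0 \<and> R (D x) = 0" for x
  proof -
    have "inner (D x) (S (D x)) + inner (D x) (R (D x)) = 0"
      using SRD[of x] by (metis inner_add_right inner_zero_right)
    moreover have "inner (D x) (S (D x)) \<ge> 0" "inner (D x) (R (D x)) \<ge> 0" by (rule posS, rule posR)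
    ultimately have "inner (D x) (S (D x)) = 0" "inner (D x) (R (D x)) = 0" by linarith+
    thus ?thesis using pos_zero[OF blS saS posS] pos_zero[OF blR saR posR] by blast
  qed
  have "inner (D x0) (D x0) = inner x0 (D (D x0))"
    using saS saR unfolding isadj_def D_def
    by (simp add: inner_diff_left inner_diff_right linear_diff[OF lS] linear_diff[OF lR])
  also have "D (D x0) = 0" using zero[of x0] by (simp add: D_def)
  finally have "D x0 = 0" by simp
  thus "S x0 = R x0" by (simp add: D_def)
qed

lemma adj_swap:
  fixes F1 G1 F2 G2 :: "'h::{real_inner,complete_space} \<Rightarrow> 'h"
  assumes "bounded_linear F1" "bounded_linear G1" "bounded_linear F2" "bounded_linear G2"
    and "\<And>y. F1 (G1 y) = c *\<^sub>R G2 (F2 y)"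
  shows "adj G1 (adj F1 x) = c *\<^sub>R adj F2 (adj G2 x)"
proof (rule vec_eq_inner)
  fix y
  have "inner (adj G1 (adj F1 x)) y = inner x (F1 (G1 y))" by (simp add: adj_inner assms)
  also have "\<dots> = c * inner x (G2 (F2 y))" by (simp add: assms(5))
  also have "\<dots> = c * inner (adj F2 (adj G2 x)) y" by (simp add: adj_inner assms)
  finally show "inner (adj G1 (adj F1 x)) y = inner (c *\<^sub>R adj F2 (adj G2 x)) y" by simp
qed

lemma selfadj_J:
  assumes J: "cstruct J" and sa: "isadj S S" and c: "\<And>x. S (J x) = J (S x)"
  shows "inner x (J (S x)) = 0"
proof -
  have "inner x (J (S x)) = - inner (J x) (S x)" by (simp add: cs_skew[OF J])
  also have "\<dots> = - inner (S (J x)) x" using sa unfolding isadj_def by (metis inner_commute)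
  also have "\<dots> = - inner x (J (S x))" by (simp add: c inner_commute)
  finally show ?thesis by simp
qed

lemma pdiff_padd: "pdiff f g = padd f (psc (-1) g)"
  by (simp add: pdiff_def padd_def psc_def)

lemma CP2_pdiff: "f \<in> CP2_alg \<Longrightarrow> g \<in> CP2_alg \<Longrightarrow> pdiff f g \<in> CP2_alg"
  unfolding pdiff_padd by (intro CP2_alg.intros)

lemma pstar_p: "pstar (p i j) = p j i"
  by (simp add: p_def pstar_mon wstar_def)

lemma pmul_zs_z: "pmul (zs i) (z j) = p i j"
  by (simp add: zs_def z_def p_def pmul_mon)

lemmas CP2_intros = CP2_alg.intros CP2_pdiff

locale cpctx =
  fixes q :: real and J :: "'h::{real_inner,complete_space} \<Rightarrow> 'h" and \<pi> :: "poly \<Rightarrow> 'h \<Rightarrow> 'h"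
  assumes q0: "0 < q" and q1: "q < 1" and J: "cstruct J"
    and rep: "star_rep J q CP2_alg \<pi>"
    and ker: "\<forall>x. \<pi> (p G1 G1) x = 0 \<longrightarrow> x = 0"
begin

lemma cb: "f \<in> CP2_alg \<Longrightarrow> cbounded J (\<pi> f)" using rep by (simp add: star_rep_def)
lemma bl: "f \<in> CP2_alg \<Longrightarrow> bounded_linear (\<pi> f)" using cb cbounded_bl by blast
lemma wd: "f \<in> CP2_alg \<Longrightarrow> g \<in> CP2_alg \<Longrightarrow> pdiff f g \<in> S5_ideal q \<Longrightarrow> \<pi> f x = \<pi> g x"
  using rep by (simp add: star_rep_def)
lemma hom_one: "\<pi> pone = id" using rep by (simp add: star_rep_def)
lemma hom_add: "f \<in> CP2_alg \<Longrightarrow> g \<in> CP2_alg \<Longrightarrow> \<pi> (padd f g) x = \<pi> f x + \<pi> g x"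
  using rep by (simp add: star_rep_def)
lemma hom_sc: "f \<in> CP2_alg \<Longrightarrow> \<pi> (psc c f) x = cscale J c (\<pi> f) x"
  using rep by (simp add: star_rep_def)
lemma hom_scR: "f \<in> CP2_alg \<Longrightarrow> \<pi> (psc (of_real r) f) x = r *\<^sub>R \<pi> f x"
  by (simp add: hom_sc cscale_def)
lemma hom_mul: "f \<in> CP2_alg \<Longrightarrow> g \<in> CP2_alg \<Longrightarrow> \<pi> (pmul f g) x = \<pi> f (\<pi> g x)"
  using rep by (simp add: star_rep_def)
lemma hom_mul': "f \<in> CP2_alg \<Longrightarrow> g \<in> CP2_alg \<Longrightarrow> \<pi> (pmul f g) = \<pi> f \<circ> \<pi> g"
  using rep by (simp add: star_rep_def)
lemma hom_star: "f \<in> CP2_alg \<Longrightarrow> \<pi> (pstar f) = adj (\<pi> f)"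
  using rep cadj_eq[OF J cb] by (simp add: star_rep_def)
lemma hom_diff: "f \<in> CP2_alg \<Longrightarrow> g \<in> CP2_alg \<Longrightarrow> \<pi> (pdiff f g) x = \<pi> f x - \<pi> g x"
  unfolding pdiff_padd by (simp add: hom_add hom_sc CP2_alg.intros cscale_def)

abbreviation "T i j \<equiv> \<pi> (p i j)"
abbreviation "A \<equiv> T G1 G1"

lemma pCP: "p i j \<in> CP2_alg" by (rule CP2_alg.gen)
lemma T_bl: "bounded_linear (T i j)" by (rule bl[OF pCP])
lemma T_cb: "cbounded J (T i j)" by (rule cb[OF pCP])
lemma T_adj: "T j i = adj (T i j)" using hom_star[OF pCP, of i j] by (simp add: pstar_p)
lemma T_isadj: "isadj (T j i) (T i j)"
proof -
  have "isadj (adj (T i j)) (T i j)" by (rule adj_isadj[OF T_bl])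
  thus ?thesis by (simp only: T_adj[of j i, symmetric])
qed
lemma T_inner: "inner (T j i x) y = inner x (T i j y)" using T_isadj[of j i] unfolding isadj_def by simp
lemma A_sa: "isadj A A" using T_isadj[of G1 G1] .
lemma T_lin: "linear (T i j)" by (rule bounded_linear.linear[OF T_bl])

lemmas homs = hom_add hom_scR hom_mul hom_diff CP2_intros pCP

lemma Eop: "f \<in> CP2_alg \<Longrightarrow> g \<in> CP2_alg \<Longrightarrow> pdiff f g \<in> S5_ideal q \<Longrightarrow> \<pi> f x = \<pi> g x"
  by (rule wd)

lemma qne: "q \<noteq> 0" using q0 by simp

lemma opE1: "A x = A (A x) + T G1 G2 (T G2 G1 x) + T G1 G3 (T G3 G1 x)"
  using Eop[OF _ _ E1[OF qne], of x] by (simp add: homs del: of_real_power of_real_diff of_real_inverse)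
lemma opE2: "T G2 G1 (T G1 G2 x) = q^2 *\<^sub>R A (T G2 G2 x)"
  using Eop[OF _ _ E2[OF qne], of x] by (simp add: homs del: of_real_power of_real_diff of_real_inverse)
lemma opE3: "T G3 G1 (T G1 G3 x) = q^2 *\<^sub>R A (T G3 G3 x)"
  using Eop[OF _ _ E3[OF qne], of x] by (simp add: homs del: of_real_power of_real_diff of_real_inverse)
lemma opE4: "A (T G2 G2 x) = T G2 G2 (A x)"
  using Eop[OF _ _ E4[OF qne], of x] by (simp add: homs del: of_real_power of_real_diff of_real_inverse)
lemma opE5: "A (T G3 G3 x) = T G3 G3 (A x)"
  using Eop[OF _ _ E5[OF qne], of x] by (simp add: homs del: of_real_power of_real_diff of_real_inverse)
lemma opE6: "A (T G2 G3 x) = T G2 G3 (A x)"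
  using Eop[OF _ _ E6[OF qne], of x] by (simp add: homs del: of_real_power of_real_diff of_real_inverse)
lemma opE7: "T G2 G1 (T G1 G3 x) = q^2 *\<^sub>R A (T G2 G3 x)"
  using Eop[OF _ _ E7[OF qne], of x] by (simp add: homs del: of_real_power of_real_diff of_real_inverse)
lemma opE8: "A (T G1 G2 x) = q^2 *\<^sub>R T G1 G2 (A x)"
  using Eop[OF _ _ E8[OF qne], of x] by (simp add: homs del: of_real_power of_real_diff of_real_inverse)
lemma opE9: "A (T G1 G3 x) = q^2 *\<^sub>R T G1 G3 (A x)"
  using Eop[OF _ _ E9[OF qne], of x] by (simp add: homs del: of_real_power of_real_diff of_real_inverse)
lemma opE10: "T G1 G3 (T G1 G2 x) = inverse q *\<^sub>R T G1 G2 (T G1 G3 x)"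
  using Eop[OF _ _ E10[OF qne], of x] by (simp add: homs del: of_real_power of_real_diff of_real_inverse)
lemma opE11: "T G1 G3 (T G2 G1 x) = inverse q *\<^sub>R A (T G2 G3 x)"
  using Eop[OF _ _ E11[OF qne], of x] by (simp add: homs del: of_real_power of_real_diff of_real_inverse)
lemma opE12: "T G1 G2 (T G2 G1 x) = A (T G2 G2 x) - (1 - q^2) *\<^sub>R A (A x)"
  using Eop[OF _ _ E12[OF qne], of x] by (simp add: homs del: of_real_power of_real_diff of_real_inverse)
lemma opE13: "T G1 G3 (T G3 G1 x) = A (T G3 G3 x) - (1 - q^2) *\<^sub>R (A (A x) + A (T G2 G2 x) - (1 - q^2) *\<^sub>R A (A x))"
  using Eop[OF _ _ E13[OF qne], of x] by (simp add: homs del: of_real_power of_real_diff of_real_inverse)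
lemma opE14: "x = q^4 *\<^sub>R A x + q^2 *\<^sub>R T G2 G2 x + T G3 G3 x"
  using Eop[OF _ _ E14[OF qne], of x] by (simp add: homs hom_one del: of_real_power of_real_diff of_real_inverse)

end



context cpctx begin

lemma A_bl: "bounded_linear A" by (rule T_bl)
lemma A_lin: "linear A" by (rule T_lin)
lemma A_J: "A (J x) = J (A x)" using T_cb by (simp add: cbounded_def)

lemma A_pos: "norm (A x)^2 \<le> inner x (A x)"
proof -
  have "inner x (A x) = inner x (A (A x)) + inner x (T G1 G2 (T G2 G1 x)) + inner x (T G1 G3 (T G3 G1 x))"
    by (subst opE1) (simp add: inner_add_right)
  also have "inner x (A (A x)) = inner (A x) (A x)" by (simp add: T_inner[of G1 G1, symmetric])
  also have "inner x (T G1 G2 (T G2 G1 x)) = inner (T G2 G1 x) (T G2 G1 x)" by (simp add: T_inner[of G2 G1, symmetric])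
  also have "inner x (T G1 G3 (T G3 G1 x)) = inner (T G3 G1 x) (T G3 G1 x)" by (simp add: T_inner[of G3 G1, symmetric])
  finally have "inner x (A x) = norm (A x)^2 + norm (T G2 G1 x)^2 + norm (T G3 G1 x)^2"
    by (simp add: power2_norm_eq_inner)
  thus ?thesis by (smt (verit) zero_le_power2)
qed

lemma sqA: "sqhyp A" unfolding sqhyp_def using A_bl A_pos by simp

definition Z1 where "Z1 = rt A"

lemma Z1_bl: "bounded_linear Z1" unfolding Z1_def by (rule rt_bl[OF sqA])
lemma Z1_lin: "linear Z1" by (rule bounded_linear.linear[OF Z1_bl])
lemma Z1_sq: "Z1 (Z1 x) = A x" unfolding Z1_def by (rule rt_sq[OF sqA])
lemma Z1_sa: "isadj Z1 Z1" unfolding Z1_def by (rule rt_selfadj[OF sqA A_sa])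
lemma Z1_inner: "inner (Z1 x) y = inner x (Z1 y)" using Z1_sa by (simp add: isadj_def)
lemma Z1_pos: "inner x (Z1 x) \<ge> 0" unfolding Z1_def by (rule rt_pos[OF sqA])
lemma Z1_comm: "bounded_linear C \<Longrightarrow> (\<And>x. A (C x) = C (A x)) \<Longrightarrow> Z1 (C x) = C (Z1 x)"
  unfolding Z1_def by (rule rt_intertw[OF sqA sqA])
lemma Z1_J: "Z1 (J x) = J (Z1 x)" by (rule Z1_comm[OF cs_bl[OF J] A_J])
lemma Z1_cb: "cbounded J Z1" unfolding cbounded_def using Z1_bl Z1_J by simp
lemma Z1_A: "Z1 (A x) = A (Z1 x)" by (simp add: Z1_sq[symmetric])
lemma A_inj: "A x = 0 \<Longrightarrow> x = 0" using ker by simp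
lemma Z1_inj: "Z1 x = 0 \<Longrightarrow> x = 0"
proof -
  assume "Z1 x = 0" hence "A x = 0" using Z1_sq[of x] linear_0[OF Z1_lin] by simp
  thus "x = 0" by (rule A_inj)
qed
lemma Z1_dense: "closure (range Z1) = UNIV" by (rule selfadj_dense[OF Z1_bl Z1_sa Z1_inj])
lemma A_dense: "closure (range A) = UNIV" by (rule selfadj_dense[OF A_bl A_sa A_inj])
lemma Z1_cpos: "cpositive J Z1"
  unfolding cpositive_def cinner_def using selfadj_J[OF J Z1_sa Z1_J] Z1_pos by simp
lemma Z1_adj: "adj Z1 = Z1" by (rule adj_eq[OF Z1_bl Z1_sa])

lemma Tkl_Z1: "A (T k l x) = T k l (A x) \<Longrightarrow> (\<And>x. A (T k l x) = T k l (A x)) \<Longrightarrow> Z1 (T k l x) = T k l (Z1 x)"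
  by (rule Z1_comm[OF T_bl])

lemma Zk_ex:
  assumes Ek: "\<And>x. T k G1 (T G1 k x) = q^2 *\<^sub>R A (T k k x)"
    and Ck: "\<And>x. A (T k k x) = T k k (A x)"
  shows "\<exists>W. cbounded J W \<and> (\<forall>x. W (Z1 x) = inverse q *\<^sub>R T G1 k x)"
proof -
  obtain K where K: "\<And>y. norm (T k k y) \<le> norm y * K" "K > 0"
    using bounded_linear.pos_bounded[OF T_bl[of k k]] by blast
  define R where "R x = inverse q *\<^sub>R T G1 k x" for x
  have blR: "bounded_linear R" unfolding R_def by (intro bounded_linear_compose[OF bounded_linear_scaleR_right T_bl])
  have bound: "norm (R x) \<le> sqrt K * norm (Z1 x)" for x
  proof -
    have "norm (T G1 k x)^2 = inner x (T k G1 (T G1 k x))"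
      by (simp add: power2_norm_eq_inner T_inner[of G1 k, symmetric])
    also have "\<dots> = q^2 * inner x (Z1 (Z1 (T k k x)))" by (simp add: Ek Z1_sq)
    also have "\<dots> = q^2 * inner (Z1 x) (T k k (Z1 x))"
    proof -
      have c: "Z1 (T k k y) = T k k (Z1 y)" for y by (rule Z1_comm[OF T_bl Ck])
      have "inner x (Z1 (Z1 (T k k x))) = inner x (Z1 (T k k (Z1 x)))" by (simp only: c)
      also have "\<dots> = inner (Z1 x) (T k k (Z1 x))" by (simp only: Z1_inner)
      finally show ?thesis by simp
    qed
    also have "\<dots> \<le> q^2 * (norm (Z1 x) * (norm (Z1 x) * K))"
    proof (intro mult_left_mono)
      have "inner (Z1 x) (T k k (Z1 x)) \<le> norm (Z1 x) * norm (T k k (Z1 x))" by (rule norm_cauchy_schwarz)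
      also have "\<dots> \<le> norm (Z1 x) * (norm (Z1 x) * K)" by (intro mult_left_mono K(1)) simp
      finally show "inner (Z1 x) (T k k (Z1 x)) \<le> norm (Z1 x) * (norm (Z1 x) * K)" .
    qed simp
    finally have a: "norm (T G1 k x)^2 \<le> q^2 * (K * norm (Z1 x)^2)" by (simp add: power2_eq_square algebra_simps)
    have "norm (R x)^2 = inverse q ^2 * norm (T G1 k x)^2" using q0 by (simp add: R_def power_mult_distrib)
    also have "\<dots> \<le> inverse q ^2 * (q^2 * (K * norm (Z1 x)^2))" by (intro mult_left_mono a) simp
    also have "\<dots> = (sqrt K * norm (Z1 x))^2" using q0 K(2) by (simp add: power_mult_distrib field_simps)
    finally show ?thesis by (rule power2_le_imp_le) (use K(2) in simp)
  qed
  obtain W where W: "bounded_linear W" "\<And>x. W (Z1 x) = R x"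
    using extend_op[OF Z1_bl Z1_dense Z1_inj blR bound] by blast
  have WJ: "(\<lambda>y. W (J y)) = (\<lambda>y. J (W y))"
  proof (rule right_cancel[OF Z1_dense])
    show "bounded_linear (\<lambda>y. W (J y))" by (intro bounded_linear_compose[OF W(1) cs_bl[OF J]])
    show "bounded_linear (\<lambda>y. J (W y))" by (intro bounded_linear_compose[OF cs_bl[OF J] W(1)])
    fix x
    have "W (J (Z1 x)) = R (J x)" by (simp add: Z1_J[symmetric] W(2))
    also have "\<dots> = J (R x)" using T_cb by (simp add: R_def cbounded_def cs_scale[OF J])
    finally show "W (J (Z1 x)) = J (W (Z1 x))" by (simp add: W(2))
  qed
  have "cbounded J W" unfolding cbounded_def using W(1) WJ by metis
  thus ?thesis using W(2) R_def by (intro exI[of _ W]) simp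
qed

definition Z2 where "Z2 = (SOME W. cbounded J W \<and> (\<forall>x. W (Z1 x) = inverse q *\<^sub>R T G1 G2 x))"
definition Z3 where "Z3 = (SOME W. cbounded J W \<and> (\<forall>x. W (Z1 x) = inverse q *\<^sub>R T G1 G3 x))"

lemma Z2_prop: "cbounded J Z2 \<and> (\<forall>x. Z2 (Z1 x) = inverse q *\<^sub>R T G1 G2 x)"
  unfolding Z2_def by (rule someI_ex[OF Zk_ex[OF opE2 opE4]])
lemma Z3_prop: "cbounded J Z3 \<and> (\<forall>x. Z3 (Z1 x) = inverse q *\<^sub>R T G1 G3 x)"
  unfolding Z3_def by (rule someI_ex[OF Zk_ex[OF opE3 opE5]])

lemma Z2_cb: "cbounded J Z2" and Z3_cb: "cbounded J Z3" using Z2_prop Z3_prop by auto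
lemma Z2_bl: "bounded_linear Z2" and Z3_bl: "bounded_linear Z3" using Z2_cb Z3_cb cbounded_bl by auto
lemma Z2_lin: "linear Z2" and Z3_lin: "linear Z3" using Z2_bl Z3_bl bounded_linear.linear by auto
lemma T12_Z: "T G1 G2 x = q *\<^sub>R Z2 (Z1 x)" using Z2_prop q0 by simp
lemma T13_Z: "T G1 G3 x = q *\<^sub>R Z3 (Z1 x)" using Z3_prop q0 by simp

end



context cpctx begin

abbreviation "Zs2 \<equiv> adj Z2"
abbreviation "Zs3 \<equiv> adj Z3"

lemma Zs2_bl: "bounded_linear Zs2" by (rule adj_bl[OF Z2_bl])
lemma Zs3_bl: "bounded_linear Zs3" by (rule adj_bl[OF Z3_bl])
lemma Zs2_lin: "linear Zs2" using Zs2_bl bounded_linear.linear by auto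
lemma Zs3_lin: "linear Zs3" using Zs3_bl bounded_linear.linear by auto

lemma Z1_cancel: "(\<And>x. inner (Z1 x) u = 0) \<Longrightarrow> u = 0"
proof -
  assume "\<And>x. inner (Z1 x) u = 0"
  hence "inner x (Z1 u) = 0" for x by (simp add: Z1_inner)
  from this[of "Z1 u"] have "Z1 u = 0" by simp
  thus "u = 0" by (rule Z1_inj)
qed

lemma ZsZ_gen:
  fixes Zk Zl :: "'h \<Rightarrow> 'h"
  assumes blk: "bounded_linear Zk" and bll: "bounded_linear Zl"
    and Tk: "\<And>x. T G1 k x = q *\<^sub>R Zk (Z1 x)" and Tl: "\<And>x. T G1 l x = q *\<^sub>R Zl (Z1 x)"
    and E: "\<And>x. T k G1 (T G1 l x) = q^2 *\<^sub>R A (T k l x)"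
    and C: "\<And>x. A (T k l x) = T k l (A x)"
  shows "adj Zk (Zl y) = T k l y"
proof -
  have c: "Z1 (T k l y) = T k l (Z1 y)" for y by (rule Z1_comm[OF T_bl C])
  have "(\<lambda>y. adj Zk (Zl y)) = T k l"
  proof (rule right_cancel[OF Z1_dense])
    show "bounded_linear (\<lambda>y. adj Zk (Zl y))" by (intro bounded_linear_compose[OF adj_bl[OF blk] bll])
    show "bounded_linear (T k l)" by (rule T_bl)
    fix y
    show "adj Zk (Zl (Z1 y)) = T k l (Z1 y)"
    proof -
      have "inner (Z1 x) (adj Zk (Zl (Z1 y)) - T k l (Z1 y)) = 0" for x
      proof -
        have "inner (Z1 x) (adj Zk (Zl (Z1 y))) = inner (Zk (Z1 x)) (Zl (Z1 y))" by (simp add: adj_inner2[OF blk])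
        also have "\<dots> = inverse q ^2 * inner (T G1 k x) (T G1 l y)" using q0 by (simp add: Tk Tl power2_eq_square field_simps)
        also have "\<dots> = inverse q ^2 * inner x (T k G1 (T G1 l y))" by (simp add: T_inner[of G1 k])
        also have "\<dots> = inner x (A (T k l y))" using q0 by (simp add: E power2_eq_square field_simps)
        also have "\<dots> = inner x (Z1 (Z1 (T k l y)))" by (simp add: Z1_sq)
        also have "\<dots> = inner (Z1 x) (T k l (Z1 y))" by (simp only: c Z1_inner)
        finally show ?thesis by (simp add: inner_diff_right)
      qed
      thus ?thesis using Z1_cancel by fastforce
    qed
  qed
  thus ?thesis by metis
qed

lemma Zs2Z2: "Zs2 (Z2 y) = T G2 G2 y" by (rule ZsZ_gen[OF Z2_bl Z2_bl T12_Z T12_Z opE2 opE4])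
lemma Zs3Z3: "Zs3 (Z3 y) = T G3 G3 y" by (rule ZsZ_gen[OF Z3_bl Z3_bl T13_Z T13_Z opE3 opE5])
lemma Zs2Z3: "Zs2 (Z3 y) = T G2 G3 y" by (rule ZsZ_gen[OF Z2_bl Z3_bl T12_Z T13_Z opE7 opE6])

lemma Zs3Z2: "Zs3 (Z2 y) = T G3 G2 y"
proof -
  have a: "isadj Z2 Zs2" by (rule isadj_sym[OF adj_isadj[OF Z2_bl]])
  have b: "isadj Zs3 Z3" by (rule adj_isadj[OF Z3_bl])
  have "isadj (Zs3 \<circ> Z2) (Zs2 \<circ> Z3)" by (rule isadj_comp[OF a b])
  moreover have "Zs2 \<circ> Z3 = T G2 G3" by (rule ext) (simp add: Zs2Z3)
  ultimately have "isadj (\<lambda>y. Zs3 (Z2 y)) (T G2 G3)" by (simp add: o_def)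
  hence "adj (T G2 G3) = (\<lambda>y. Zs3 (Z2 y))" by (rule adj_eq[OF T_bl])
  thus ?thesis using T_adj[of G3 G2] by simp
qed

lemma T21_Z: "T G2 G1 x = q *\<^sub>R Z1 (Zs2 x)"
proof -
  have "isadj (\<lambda>x. q *\<^sub>R Z1 (Zs2 x)) (T G1 G2)"
    unfolding isadj_def by (simp add: T12_Z Z1_inner adj_inner[OF Z2_bl])
  hence "adj (T G1 G2) = (\<lambda>x. q *\<^sub>R Z1 (Zs2 x))" by (rule adj_eq[OF T_bl])
  thus ?thesis using T_adj[of G2 G1] by simp
qed

lemma T31_Z: "T G3 G1 x = q *\<^sub>R Z1 (Zs3 x)"
proof -
  have "isadj (\<lambda>x. q *\<^sub>R Z1 (Zs3 x)) (T G1 G3)"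
    unfolding isadj_def by (simp add: T13_Z Z1_inner adj_inner[OF Z3_bl])
  hence "adj (T G1 G3) = (\<lambda>x. q *\<^sub>R Z1 (Zs3 x))" by (rule adj_eq[OF T_bl])
  thus ?thesis using T_adj[of G3 G1] by simp
qed

lemma AZ_gen:
  fixes Zk :: "'h \<Rightarrow> 'h"
  assumes blk: "bounded_linear Zk" and Tk: "\<And>x. T G1 k x = q *\<^sub>R Zk (Z1 x)"
    and E: "\<And>x. A (T G1 k x) = q^2 *\<^sub>R T G1 k (A x)"
  shows "A (Zk x) = q^2 *\<^sub>R Zk (A x)"
proof -
  have lk: "linear Zk" using blk bounded_linear.linear by auto
  have "(\<lambda>x. A (Zk x)) = (\<lambda>x. q^2 *\<^sub>R Zk (A x))"
  proof (rule right_cancel[OF Z1_dense])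
    show "bounded_linear (\<lambda>x. A (Zk x))" by (intro bounded_linear_compose[OF A_bl blk])
    show "bounded_linear (\<lambda>x. q^2 *\<^sub>R Zk (A x))"
      by (intro bounded_linear_compose[OF bounded_linear_scaleR_right] bounded_linear_compose[OF blk A_bl])
    fix x
    have "A (Zk (Z1 x)) = inverse q *\<^sub>R A (T G1 k x)"
      using q0 by (simp add: Tk linear_scale[OF A_lin])
    also have "\<dots> = inverse q *\<^sub>R q^2 *\<^sub>R T G1 k (A x)" by (simp add: E)
    also have "\<dots> = q^2 *\<^sub>R Zk (Z1 (A x))" using q0 by (simp add: Tk power2_eq_square)
    also have "\<dots> = q^2 *\<^sub>R Zk (A (Z1 x))" by (simp add: Z1_A)
    finally show "A (Zk (Z1 x)) = q^2 *\<^sub>R Zk (A (Z1 x))" .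
  qed
  thus ?thesis by metis
qed

lemma AZ2: "A (Z2 x) = q^2 *\<^sub>R Z2 (A x)" by (rule AZ_gen[OF Z2_bl T12_Z opE8])
lemma AZ3: "A (Z3 x) = q^2 *\<^sub>R Z3 (A x)" by (rule AZ_gen[OF Z3_bl T13_Z opE9])

definition A' where "A' x = q^2 *\<^sub>R A x" for x

lemma sqA': "sqhyp A'"
  unfolding sqhyp_def
proof (intro conjI allI)
  show "bounded_linear A'" unfolding A'_def by (intro bounded_linear_compose[OF bounded_linear_scaleR_right A_bl])
  fix x
  have q2: "q^2 \<le> 1" "0 \<le> q^2" using q0 q1 by (simp_all add: power_le_one)
  have "norm (A' x)^2 = q^2 * (q^2 * norm (A x)^2)" by (simp add: A'_def power_mult_distrib)
  also have "\<dots> \<le> q^2 * (1 * norm (A x)^2)" using q2 by (intro mult_left_mono mult_right_mono) auto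
  also have "\<dots> \<le> q^2 * inner x (A x)" using q2 A_pos by (intro mult_left_mono) auto
  also have "\<dots> = inner x (A' x)" by (simp add: A'_def)
  finally show "norm (A' x)^2 \<le> inner x (A' x)" .
qed

lemma rtA': "rt A' = (\<lambda>x. q *\<^sub>R Z1 x)"
proof (rule sqrt_unique)
  show "bounded_linear (rt A')" by (rule rt_bl[OF sqA'])
  show "bounded_linear (\<lambda>x. q *\<^sub>R Z1 x)" by (intro bounded_linear_compose[OF bounded_linear_scaleR_right Z1_bl])
  have "isadj A' A'" using A_sa by (simp add: isadj_def A'_def)
  thus "isadj (rt A') (rt A')" by (rule rt_selfadj[OF sqA'])
  show "isadj (\<lambda>x. q *\<^sub>R Z1 x) (\<lambda>x. q *\<^sub>R Z1 x)" using Z1_sa by (simp add: isadj_def)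
  show "inner x (rt A' x) \<ge> 0" for x by (rule rt_pos[OF sqA'])
  show "inner x (q *\<^sub>R Z1 x) \<ge> 0" for x using Z1_pos q0 by simp
  show "rt A' (q *\<^sub>R Z1 x) = q *\<^sub>R Z1 (rt A' x)" for x
  proof -
    have "rt A' (Z1 x) = Z1 (rt A' x)"
      by (rule rt_intertw[OF sqA' sqA' Z1_bl]) (simp add: A'_def Z1_A linear_scale[OF Z1_lin])
    thus ?thesis using linear_scale[OF bounded_linear.linear[OF rt_bl[OF sqA']]] by simp
  qed
  show "rt A' (rt A' x) = q *\<^sub>R Z1 (q *\<^sub>R Z1 x)" for x
    by (simp add: rt_sq[OF sqA'] A'_def linear_scale[OF Z1_lin] Z1_sq power2_eq_square)
qed

lemma Z1Zk_gen:
  fixes Zk :: "'h \<Rightarrow> 'h"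
  assumes blk: "bounded_linear Zk" and AZ: "\<And>x. A (Zk x) = q^2 *\<^sub>R Zk (A x)"
  shows "Z1 (Zk x) = q *\<^sub>R Zk (Z1 x)"
proof -
  have lk: "linear Zk" using blk bounded_linear.linear by auto
  have "rt A (Zk x) = Zk (rt A' x)"
    by (rule rt_intertw[OF sqA sqA' blk]) (simp add: AZ A'_def linear_scale[OF lk])
  thus ?thesis by (simp add: Z1_def rtA' linear_scale[OF lk])
qed

lemma Z1Z2: "Z1 (Z2 x) = q *\<^sub>R Z2 (Z1 x)" by (rule Z1Zk_gen[OF Z2_bl AZ2])
lemma Z1Z3: "Z1 (Z3 x) = q *\<^sub>R Z3 (Z1 x)" by (rule Z1Zk_gen[OF Z3_bl AZ3])

end



context zfam begin

lemma PT_star_rep: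
  assumes H1: "\<And>i j x. gnum i < gnum j \<Longrightarrow> Z i (Z j x) = q *\<^sub>R Z j (Z i x)"
    and H2: "\<And>i j x. i \<noteq> j \<Longrightarrow> Zs i (Z j x) = q *\<^sub>R Z j (Zs i x)"
    and H3: "\<And>x. Zs G1 (Z G1 x) = Z G1 (Zs G1 x)"
    and H4: "\<And>x. Zs G2 (Z G2 x) - Z G2 (Zs G2 x) = (1 - q\<^sup>2) *\<^sub>R Z G1 (Zs G1 x)"
    and H5: "\<And>x. Zs G3 (Z G3 x) - Z G3 (Zs G3 x) = (1 - q\<^sup>2) *\<^sub>R (Z G1 (Zs G1 x) + Z G2 (Zs G2 x))"
    and H6: "\<And>x. Z G1 (Zs G1 x) + Z G2 (Zs G2 x) + Z G3 (Zs G3 x) = x"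
  shows "star_rep J q polys PTf"
  unfolding star_rep_def polys_def
proof (intro conjI ballI allI impI)
  fix f g c assume f: "f \<in> {f. fsupp f}" and g: "g \<in> {f. fsupp f}"
  hence f': "fsupp f" and g': "fsupp g" by auto
  show "cbounded J (PTf f)" by (rule PT_cb[OF f'])
  show "PTf (padd f g) = (\<lambda>x. PTf f x + PTf g x)" by (rule ext) (rule PT_padd[OF f' g'])
  show "PTf (psc c f) = cscale J c (PTf f)" by (rule ext) (simp add: PT_psc[OF f'] cscale_csm)
  show "PTf (pmul f g) = PTf f \<circ> PTf g" by (rule PT_pmul_fun[OF f' g'])
  show "PTf (pstar f) = cadj J (PTf f)"
    by (simp add: cadj_eq[OF J PT_cb[OF f']] adj_eq[OF cbounded_bl[OF PT_cb[OF f']] PT_pstar[OF f']])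
  assume "pdiff f g \<in> S5_ideal q"
  hence "PTf (pdiff f g) x = 0" for x using PT_ideal[OF H1 H2 H3 H4 H5 H6, of "pdiff f g" x] by blast
  thus "PTf f = PTf g" by (intro ext) (simp add: PT_pdiff[OF f' g'])
next
  show "PTf pone = id" by (simp add: PT_z id_def)
qed

end

lemma sc_eq: "(c::real) \<noteq> 0 \<Longrightarrow> c *\<^sub>R (a::'a::real_vector) = (c * d) *\<^sub>R b \<Longrightarrow> a = d *\<^sub>R b"
proof -
  assume c: "c \<noteq> 0" and h: "c *\<^sub>R a = (c * d) *\<^sub>R b"
  have "a = inverse c *\<^sub>R (c *\<^sub>R a)" using c by simp
  also have "\<dots> = inverse c *\<^sub>R ((c * d) *\<^sub>R b)" using h by simp
  also have "\<dots> = d *\<^sub>R b" using c by simp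
  finally show ?thesis .
qed
lemma sc_eq2: "(c::real) \<noteq> 0 \<Longrightarrow> inverse c *\<^sub>R (a::'a::real_vector) = b \<Longrightarrow> a = c *\<^sub>R b"
proof -
  assume c: "c \<noteq> 0" and h: "inverse c *\<^sub>R a = b"
  have "a = c *\<^sub>R (inverse c *\<^sub>R a)" using c by simp
  also have "\<dots> = c *\<^sub>R b" using h by simp
  finally show ?thesis .
qed

context cpctx begin

lemma Z2Z3: "Z2 (Z3 x) = q *\<^sub>R Z3 (Z2 x)"
proof -
  have "(\<lambda>x. Z2 (Z3 x)) = (\<lambda>x. q *\<^sub>R Z3 (Z2 x))"
  proof (rule right_cancel[OF A_dense])
    show "bounded_linear (\<lambda>x. Z2 (Z3 x))" by (intro bounded_linear_compose[OF Z2_bl Z3_bl])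
    show "bounded_linear (\<lambda>x. q *\<^sub>R Z3 (Z2 x))"
      by (intro bounded_linear_compose[OF bounded_linear_scaleR_right] bounded_linear_compose[OF Z3_bl Z2_bl])
    fix x
    have a: "T G1 G3 (T G1 G2 x) = q^3 *\<^sub>R Z3 (Z2 (A x))"
      by (simp add: T12_Z T13_Z linear_scale[OF Z1_lin] linear_scale[OF Z2_lin] linear_scale[OF Z3_lin]
          Z1Z2 Z1_sq power3_eq_cube)
    have b: "T G1 G2 (T G1 G3 x) = q^3 *\<^sub>R Z2 (Z3 (A x))"
      by (simp add: T12_Z T13_Z linear_scale[OF Z1_lin] linear_scale[OF Z2_lin] linear_scale[OF Z3_lin]
          Z1Z3 Z1_sq power3_eq_cube)
    have "q^3 *\<^sub>R Z3 (Z2 (A x)) = inverse q *\<^sub>R q^3 *\<^sub>R Z2 (Z3 (A x))" using opE10[of x] a b by simp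
    hence "q^2 *\<^sub>R Z2 (Z3 (A x)) = q^2 *\<^sub>R (q *\<^sub>R Z3 (Z2 (A x)))" using q0
      by (simp add: power3_eq_cube power2_eq_square field_simps)
    thus "Z2 (Z3 (A x)) = q *\<^sub>R Z3 (Z2 (A x))" using q0 by (intro sc_eq[of "q^2" _ q]) (auto simp: mult.commute)
  qed
  thus ?thesis by metis
qed

lemma A_adj: "adj A = A" by (rule adj_eq[OF A_bl A_sa])

lemma ZsA_gen:
  fixes Zk :: "'h \<Rightarrow> 'h"
  assumes blk: "bounded_linear Zk" and AZ: "\<And>x. A (Zk x) = q^2 *\<^sub>R Zk (A x)"
  shows "adj Zk (A x) = q^2 *\<^sub>R A (adj Zk x)"
  using adj_swap[OF A_bl blk A_bl blk AZ, of x] by (simp add: A_adj)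

lemma Zs2A: "Zs2 (A x) = q^2 *\<^sub>R A (Zs2 x)" by (rule ZsA_gen[OF Z2_bl AZ2])
lemma Zs3A: "Zs3 (A x) = q^2 *\<^sub>R A (Zs3 x)" by (rule ZsA_gen[OF Z3_bl AZ3])

lemma Zs2Z1: "Zs2 (Z1 x) = q *\<^sub>R Z1 (Zs2 x)"
  using adj_swap[OF Z1_bl Z2_bl Z1_bl Z2_bl Z1Z2, of x] by (simp add: Z1_adj)
lemma Zs3Z1: "Zs3 (Z1 x) = q *\<^sub>R Z1 (Zs3 x)"
  using adj_swap[OF Z1_bl Z3_bl Z1_bl Z3_bl Z1Z3, of x] by (simp add: Z1_adj)

lemma Zs2Z3q: "Zs2 (Z3 x) = q *\<^sub>R Z3 (Zs2 x)"
proof -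
  have "(\<lambda>x. Zs2 (Z3 x)) = (\<lambda>x. q *\<^sub>R Z3 (Zs2 x))"
  proof (rule right_cancel[OF A_dense])
    show "bounded_linear (\<lambda>x. Zs2 (Z3 x))" by (intro bounded_linear_compose[OF Zs2_bl Z3_bl])
    show "bounded_linear (\<lambda>x. q *\<^sub>R Z3 (Zs2 x))"
      by (intro bounded_linear_compose[OF bounded_linear_scaleR_right] bounded_linear_compose[OF Z3_bl Zs2_bl])
    fix x
    have a: "T G1 G3 (T G2 G1 x) = Z3 (Zs2 (A x))"
      by (simp add: T21_Z T13_Z linear_scale[OF Z1_lin] linear_scale[OF Z3_lin] Z1_sq Zs2A power2_eq_square)
    have b: "T G1 G3 (T G2 G1 x) = inverse q *\<^sub>R Zs2 (Z3 (A x))"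
      by (simp add: opE11 opE6 Zs2Z3)
    have "inverse q *\<^sub>R Zs2 (Z3 (A x)) = Z3 (Zs2 (A x))" using a b by simp
    thus "Zs2 (Z3 (A x)) = q *\<^sub>R Z3 (Zs2 (A x))" using q0 by (intro sc_eq2) auto
  qed
  thus ?thesis by metis
qed

lemma Zs3Z2q: "Zs3 (Z2 x) = q *\<^sub>R Z2 (Zs3 x)"
  using adj_swap[OF Zs2_bl Z3_bl Zs2_bl Z3_bl Zs2Z3q, of x] by (simp add: adj_adj[OF Z2_bl])

lemma Z2Zs2: "Z2 (Zs2 x) = T G2 G2 x - (1 - q^2) *\<^sub>R A x"
proof -
  have "(\<lambda>x. Z2 (Zs2 x)) = (\<lambda>x. T G2 G2 x - (1 - q^2) *\<^sub>R A x)"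
  proof (rule right_cancel[OF A_dense])
    show "bounded_linear (\<lambda>x. Z2 (Zs2 x))" by (intro bounded_linear_compose[OF Z2_bl Zs2_bl])
    show "bounded_linear (\<lambda>x. T G2 G2 x - (1 - q^2) *\<^sub>R A x)"
      by (intro bounded_linear_sub T_bl bounded_linear_compose[OF bounded_linear_scaleR_right A_bl])
    fix x
    have a: "T G1 G2 (T G2 G1 x) = Z2 (Zs2 (A x))"
      by (simp add: T21_Z T12_Z linear_scale[OF Z1_lin] linear_scale[OF Z2_lin] Z1_sq Zs2A power2_eq_square)
    show "Z2 (Zs2 (A x)) = T G2 G2 (A x) - (1 - q^2) *\<^sub>R A (A x)" using opE12[of x] a by (simp add: opE4)
  qed
  thus ?thesis by metis
qed

lemma Z3Zs3: "Z3 (Zs3 x) = T G3 G3 x - (1 - q^2) *\<^sub>R (A x + T G2 G2 x - (1 - q^2) *\<^sub>R A x)"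
proof -
  have "(\<lambda>x. Z3 (Zs3 x)) = (\<lambda>x. T G3 G3 x - (1 - q^2) *\<^sub>R (A x + T G2 G2 x - (1 - q^2) *\<^sub>R A x))"
  proof (rule right_cancel[OF A_dense])
    show "bounded_linear (\<lambda>x. Z3 (Zs3 x))" by (intro bounded_linear_compose[OF Z3_bl Zs3_bl])
    show "bounded_linear (\<lambda>x. T G3 G3 x - (1 - q^2) *\<^sub>R (A x + T G2 G2 x - (1 - q^2) *\<^sub>R A x))"
      by (intro bounded_linear_sub bounded_linear_add T_bl bounded_linear_compose[OF bounded_linear_scaleR_right]
          A_bl)
    fix x
    have a: "T G1 G3 (T G3 G1 x) = Z3 (Zs3 (A x))"
      by (simp add: T31_Z T13_Z linear_scale[OF Z1_lin] linear_scale[OF Z3_lin] Z1_sq Zs3A power2_eq_square)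
    show "Z3 (Zs3 (A x)) = T G3 G3 (A x) - (1 - q^2) *\<^sub>R (A (A x) + T G2 G2 (A x) - (1 - q^2) *\<^sub>R A (A x))"
      using opE13[of x] a by (simp add: opE4 opE5)
  qed
  thus ?thesis by metis
qed

lemma sphere: "Z1 (Z1 x) + Z2 (Zs2 x) + Z3 (Zs3 x) = x"
proof -
  have "Z1 (Z1 x) + Z2 (Zs2 x) + Z3 (Zs3 x) = q^4 *\<^sub>R A x + q^2 *\<^sub>R T G2 G2 x + T G3 G3 x"
    by (simp add: Z1_sq Z2Zs2 Z3Zs3 algebra_simps power2_eq_square power4_eq_xxxx)
  also have "\<dots> = x" by (rule opE14[symmetric])
  finally show ?thesis .
qed

end



context cpctx begin

definition Zf :: "gen \<Rightarrow> 'h \<Rightarrow> 'h" where "Zf i = (case i of G1 \<Rightarrow> Z1 | G2 \<Rightarrow> Z2 | G3 \<Rightarrow> Z3)"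
definition Zsf :: "gen \<Rightarrow> 'h \<Rightarrow> 'h" where "Zsf i = adj (Zf i)"

lemma Zf_simps[simp]: "Zf G1 = Z1" "Zf G2 = Z2" "Zf G3 = Z3" by (simp_all add: Zf_def)
lemma Zsf_simps[simp]: "Zsf G1 = Z1" "Zsf G2 = Zs2" "Zsf G3 = Zs3" by (simp_all add: Zsf_def Z1_adj)

lemma Zf_cb: "cbounded J (Zf i)" by (cases i) (simp_all add: Z1_cb Z2_cb Z3_cb)

lemma zf: "zfam J Zf Zsf"
  by (unfold_locales) (simp_all add: J Zf_cb Zsf_def adj_isadj[OF cbounded_bl[OF Zf_cb]])

lemma H1: "gnum i < gnum j \<Longrightarrow> Zf i (Zf j x) = q *\<^sub>R Zf j (Zf i x)"
  by (cases i; cases j) (simp_all add: Z1Z2 Z1Z3 Z2Z3)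
lemma H2: "i \<noteq> j \<Longrightarrow> Zsf i (Zf j x) = q *\<^sub>R Zf j (Zsf i x)"
  by (cases i; cases j) (simp_all add: Z1Z2 Z1Z3 Zs2Z1 Zs3Z1 Zs2Z3q Zs3Z2q)
lemma H3: "Zsf G1 (Zf G1 x) = Zf G1 (Zsf G1 x)" by simp
lemma H4: "Zsf G2 (Zf G2 x) - Zf G2 (Zsf G2 x) = (1 - q\<^sup>2) *\<^sub>R Zf G1 (Zsf G1 x)"
  by (simp add: Zs2Z2 Z2Zs2 Z1_sq)
lemma H5: "Zsf G3 (Zf G3 x) - Zf G3 (Zsf G3 x) = (1 - q\<^sup>2) *\<^sub>R (Zf G1 (Zsf G1 x) + Zf G2 (Zsf G2 x))"
  by (simp add: Zs3Z3 Z3Zs3 Z1_sq Z2Zs2)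
lemma H6: "Zf G1 (Zsf G1 x) + Zf G2 (Zsf G2 x) + Zf G3 (Zsf G3 x) = x"
  using sphere by simp

abbreviation "\<pi>t \<equiv> PT J Zf Zsf"

lemma pit_rep: "star_rep J q polys \<pi>t"
  by (rule zfam.PT_star_rep[OF zf H1 H2 H3 H4 H5 H6])

lemma pit_p: "\<pi>t (p i j) = T i j"
proof
  fix x
  have "\<pi>t (p i j) x = Zsf i (Zf j x)"
    by (simp add: p_def zfam.PT_mon[OF zf] lop_def)
  also have "\<dots> = T i j x"
    by (cases i; cases j) (simp_all add: Z1_sq Z1Z2 Z1Z3 T12_Z T13_Z Zs2Z1 Zs3Z1 T21_Z T31_Z
        Zs2Z2 Zs3Z3 Zs2Z3 Zs3Z2)
  finally show "\<pi>t (p i j) x = T i j x" .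
qed

lemma pit_CP2: "f \<in> CP2_alg \<Longrightarrow> \<pi>t f = \<pi> f"
proof (induction rule: CP2_alg.induct)
  case one thus ?case by (simp add: zfam.PT_z[OF zf] hom_one id_def)
next
  case (gen i j) thus ?case by (rule pit_p)
next
  case (add f g) thus ?case
    using pit_rep CP2_fsupp hom_add by (auto simp: star_rep_def polys_def)
next
  case (sc f c) thus ?case
    using pit_rep CP2_fsupp hom_sc by (auto simp: star_rep_def polys_def)
next
  case (mul f g) thus ?case
    using pit_rep CP2_fsupp hom_mul' by (auto simp: star_rep_def polys_def)
next
  case (star f) thus ?case
    using pit_rep CP2_fsupp hom_star cadj_eq[OF J cb] by (auto simp: star_rep_def polys_def)
qed

lemma final:
  "\<exists>Z1 Z2 Z3 \<pi>t.
     cbounded J Z1 \<and> cbounded J Z2 \<and> cbounded J Z3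
   \<and> cpositive J Z1 \<and> (\<forall>x. Z1 x = 0 \<longrightarrow> x = 0)
   \<and> \<pi> (p G1 G1) = Z1 \<circ> Z1
   \<and> \<pi> (p G1 G2) = (\<lambda>x. q *\<^sub>R Z2 (Z1 x))
   \<and> \<pi> (p G1 G3) = (\<lambda>x. q *\<^sub>R Z3 (Z1 x))
   \<and> \<pi> (p G2 G1) = (\<lambda>x. q *\<^sub>R Z1 (cadj J Z2 x))
   \<and> \<pi> (p G2 G2) = cadj J Z2 \<circ> Z2
   \<and> \<pi> (p G2 G3) = cadj J Z2 \<circ> Z3
   \<and> \<pi> (p G3 G1) = (\<lambda>x. q *\<^sub>R Z1 (cadj J Z3 x))
   \<and> \<pi> (p G3 G2) = cadj J Z3 \<circ> Z2
   \<and> \<pi> (p G3 G3) = cadj J Z3 \<circ> Z3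
   \<and> star_rep J q polys \<pi>t
   \<and> \<pi>t (z G1) = Z1 \<and> \<pi>t (z G2) = Z2 \<and> \<pi>t (z G3) = Z3
   \<and> (\<forall>i j. \<pi>t (pmul (zs i) (z j)) = \<pi> (p i j))
   \<and> (\<forall>f\<in>CP2_alg. \<pi>t f = \<pi> f)
   \<and> (irreducible_rep J CP2_alg \<pi> \<longrightarrow> irreducible_rep J polys \<pi>t)"
proof (intro exI conjI)
  have c2: "cadj J Z2 = Zs2" by (rule cadj_eq[OF J Z2_cb])
  have c3: "cadj J Z3 = Zs3" by (rule cadj_eq[OF J Z3_cb])
  show "cbounded J Z1" "cbounded J Z2" "cbounded J Z3" "cpositive J Z1" by (rule Z1_cb Z2_cb Z3_cb Z1_cpos)+
  show "\<forall>x. Z1 x = 0 \<longrightarrow> x = 0" using Z1_inj by blast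
  show "T G1 G1 = Z1 \<circ> Z1" by (rule ext) (simp add: Z1_sq)
  show "T G1 G2 = (\<lambda>x. q *\<^sub>R Z2 (Z1 x))" by (rule ext) (rule T12_Z)
  show "T G1 G3 = (\<lambda>x. q *\<^sub>R Z3 (Z1 x))" by (rule ext) (rule T13_Z)
  show "T G2 G1 = (\<lambda>x. q *\<^sub>R Z1 (cadj J Z2 x))" by (rule ext) (simp add: c2 T21_Z)
  show "T G3 G1 = (\<lambda>x. q *\<^sub>R Z1 (cadj J Z3 x))" by (rule ext) (simp add: c3 T31_Z)
  show "T G2 G2 = cadj J Z2 \<circ> Z2" by (rule ext) (simp add: c2 Zs2Z2)
  show "T G2 G3 = cadj J Z2 \<circ> Z3" by (rule ext) (simp add: c2 Zs2Z3)
  show "T G3 G2 = cadj J Z3 \<circ> Z2" by (rule ext) (simp add: c3 Zs3Z2)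
  show "T G3 G3 = cadj J Z3 \<circ> Z3" by (rule ext) (simp add: c3 Zs3Z3)
  show "star_rep J q polys \<pi>t" by (rule pit_rep)
  show "\<pi>t (z G1) = Z1" "\<pi>t (z G2) = Z2" "\<pi>t (z G3) = Z3" by (simp_all add: zfam.PT_z[OF zf])
  show "\<forall>i j. \<pi>t (pmul (zs i) (z j)) = T i j" by (simp add: pmul_zs_z pit_p)
  show "\<forall>f\<in>CP2_alg. \<pi>t f = \<pi> f" using pit_CP2 by blast
  show "irreducible_rep J CP2_alg \<pi> \<longrightarrow> irreducible_rep J polys \<pi>t"
    unfolding irreducible_rep_def
  proof (rule impI)
    assume irr: "\<forall>V. closed V \<and> subspace V \<and> J ` V \<subseteq> V \<and> (\<forall>f\<in>CP2_alg. \<pi> f ` V \<subseteq> V) \<longrightarrow> V = {0} \<or> V = UNIV"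
    show "\<forall>V. closed V \<and> subspace V \<and> J ` V \<subseteq> V \<and> (\<forall>f\<in>polys. \<pi>t f ` V \<subseteq> V) \<longrightarrow> V = {0} \<or> V = UNIV"
    proof (intro allI impI)
      fix V
      assume h: "closed V \<and> subspace V \<and> J ` V \<subseteq> V \<and> (\<forall>f\<in>polys. \<pi>t f ` V \<subseteq> V)"
      have "\<forall>f\<in>CP2_alg. \<pi> f ` V \<subseteq> V"
      proof
        fix f assume f: "f \<in> CP2_alg"
        hence "f \<in> polys" using CP2_fsupp by (simp add: polys_def)
        thus "\<pi> f ` V \<subseteq> V" using h pit_CP2[OF f] by metis
      qed
      thus "V = {0} \<or> V = UNIV" using irr h by blast
    qed
  qed
qed

end

theorem lemmaD1:
  fixes q :: real
    and J :: "'h::{real_inner, complete_space} \<Rightarrow> 'h"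
    and \<pi> :: "poly \<Rightarrow> 'h \<Rightarrow> 'h"
  assumes "0 < q" and "q < 1"
    and "cstruct J"
    and "star_rep J q CP2_alg \<pi>"
    and "\<forall>x. \<pi> (p G1 G1) x = 0 \<longrightarrow> x = 0"
  shows "\<exists>Z1 Z2 Z3 \<pi>t.
     cbounded J Z1 \<and> cbounded J Z2 \<and> cbounded J Z3
   \<and> cpositive J Z1 \<and> (\<forall>x. Z1 x = 0 \<longrightarrow> x = 0)
   \<and> \<pi> (p G1 G1) = Z1 \<circ> Z1
   \<and> \<pi> (p G1 G2) = (\<lambda>x. q *\<^sub>R Z2 (Z1 x))
   \<and> \<pi> (p G1 G3) = (\<lambda>x. q *\<^sub>R Z3 (Z1 x))
   \<and> \<pi> (p G2 G1) = (\<lambda>x. q *\<^sub>R Z1 (cadj J Z2 x))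
   \<and> \<pi> (p G2 G2) = cadj J Z2 \<circ> Z2
   \<and> \<pi> (p G2 G3) = cadj J Z2 \<circ> Z3
   \<and> \<pi> (p G3 G1) = (\<lambda>x. q *\<^sub>R Z1 (cadj J Z3 x))
   \<and> \<pi> (p G3 G2) = cadj J Z3 \<circ> Z2
   \<and> \<pi> (p G3 G3) = cadj J Z3 \<circ> Z3
   \<and> star_rep J q polys \<pi>t
   \<and> \<pi>t (z G1) = Z1 \<and> \<pi>t (z G2) = Z2 \<and> \<pi>t (z G3) = Z3
   \<and> (\<forall>i j. \<pi>t (pmul (zs i) (z j)) = \<pi> (p i j))
   \<and> (\<forall>f\<in>CP2_alg. \<pi>t f = \<pi> f)
   \<and> (irreducible_rep J CP2_alg \<pi> \<longrightarrow> irreducible_rep J polys \<pi>t)"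
proof -
  interpret cpctx q J \<pi> by (unfold_locales) (use assms in auto)
  show ?thesis by (rule final)
qed


end
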